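(* Let $0<\delta<1$, let $\omega_0$ be the Cao soliton on $\mathbb{C}^n$ with Laplace–Beltrami operator $\Delta$, $X=-2r\partial_r=-4\partial_t$, and $w=e^{\delta\varphi}$. (1) For every $t_0\in\mathbb{R}$ and every $C^2$ function $u$ on $\{t\le t_0\}\subseteq\mathbb{C}^n$, \[ \sup_{t\le t_0}w|u|\le\max\left[\sup_{t=t_0}w|u|,\ \frac1{4\delta(1-\delta)n}\sup_{t\le t_0}w|(\Delta-X)u|\right]. \] (2) For every $r_0\in[1,\infty]$ and every $u$ on $\{1\le r\le r_0\}$ such that $u|_{\{r=r_0\}}=0$ if $r_0<\infty$, or $u\in C^2_\delta(\{1\le r\})$ if $r_0=\infty$, \[ \sup_{1\le r\le r_0}w|u|\le\max\left[\sup_{r=1}w|u|,\ \frac1{4\delta(1-\delta)n}\sup_{1\le r\le r_0}w|(\Delta-X)u|\right]. \]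
   Context: On $\mathbb{C}^n$, $r=|z|$, $t=\log r^2$. $F(s)=\sum_{j=0}^{n-1}(-1)^{n-j-1}\frac{(n-1)!}{j!}s^j$, $\varphi$ defined by $F(\varphi(t))e^{\varphi(t)}=\frac{e^{nt}}n+F(0)$; it satisfies $\varphi^{n-1}\varphi_te^{\varphi}=e^{nt}$ and $0<\varphi_t<n$. The Cao soliton is $\omega_0=\tfrac i2\partial\overline{\partial}\Phi_0$ with $\partial_t\Phi_0=\varphi$ (smooth Kähler on $\mathbb{C}^n$). $\Delta$ is the trace of the Hessian (so on radial functions $\Delta f=\frac{4}{\varphi^{n-1}\varphi_t}\partial_t(\varphi^{n-1}\partial_tf)$). $C^2_\delta$ is the space of $C^2$ functions $u$ with $e^{\delta\varphi}u$ bounded in $C^2$ with respect to $\omega_0$. *)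

theory Defs
  imports "HOL-Analysis.Analysis"
begin

text \<open>Setting: C^n is modelled as complex^'n, with n = CARD('n).
  Real-valued functions u :: complex^'n => real; derivatives are real Frechet derivatives.\<close>

definition Fpol :: "nat \<Rightarrow> real \<Rightarrow> real" where
  "Fpol n s = (\<Sum>j<n. (-1) ^ (n - j - 1) * (fact (n - 1) / fact j) * s ^ j)"

definition phi :: "nat \<Rightarrow> real \<Rightarrow> real" where
  "phi n t = (THE s. 0 < s \<and> Fpol n s * exp s = exp (real n * t) / real n + Fpol n 0)"

text \<open>phi as a function on C^n, t = log |z|^2; at the origin t = -infinity and phi = 0.\<close>
definition phiz :: "complex^'n::finite \<Rightarrow> real" where
  "phiz z = (if z = 0 then 0 else phi CARD('n) (ln ((norm z)\<^sup>2)))"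

text \<open>Kaehler potential of the Cao soliton: d Phi0 / dt = phi, i.e.
  Phi0(z) = integral_0^{|z|^2} phi(log s)/s ds.\<close>
definition Phi0 :: "complex^'n::finite \<Rightarrow> real" where
  "Phi0 z = integral {0..(norm z)\<^sup>2} (\<lambda>s. phi CARD('n) (ln s) / s)"

definition wgt :: "real \<Rightarrow> complex^'n::finite \<Rightarrow> real" where
  "wgt \<delta> z = exp (\<delta> * phiz z)"

definition D2 :: "(complex^'n::finite \<Rightarrow> real) \<Rightarrow> complex^'n \<Rightarrow> complex^'n \<Rightarrow> complex^'n \<Rightarrow> real" where
  "D2 u x v w = frechet_derivative (\<lambda>y. frechet_derivative u (at y) v) (at x) w"

text \<open>u is C^2 on S (S possibly closed): it is C^2 on some open set containing S.\<close>
definition C2_on :: "(complex^'n::finite) set \<Rightarrow> (complex^'n \<Rightarrow> real) \<Rightarrow> bool" where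
  "C2_on S u \<longleftrightarrow> (\<exists>U. open U \<and> S \<subseteq> U \<and>
      (\<forall>x\<in>U. u differentiable (at x)) \<and>
      (\<forall>v. \<forall>x\<in>U. (\<lambda>y. frechet_derivative u (at y) v) differentiable (at x)) \<and>
      (\<forall>v w. continuous_on U (\<lambda>x. D2 u x v w)))"

text \<open>Complex Hessian entry d_i d_{bar j} u.\<close>
definition hessC :: "(complex^'n::finite \<Rightarrow> real) \<Rightarrow> complex^'n \<Rightarrow> complex^'n^'n" where
  "hessC u z = (\<chi> i j.
      complex_of_real ((D2 u z (axis i 1) (axis j 1) + D2 u z (axis i \<i>) (axis j \<i>)) / 4)
      + \<i> * complex_of_real ((D2 u z (axis i 1) (axis j \<i>) - D2 u z (axis i \<i>) (axis j 1)) / 4))"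

text \<open>Metric coefficients g_{i bar j} of omega_0 = (i/2) dd^c Phi0.\<close>
definition gmat :: "complex^'n::finite \<Rightarrow> complex^'n^'n" where
  "gmat z = hessC Phi0 z"

definition lap :: "(complex^'n::finite \<Rightarrow> real) \<Rightarrow> complex^'n \<Rightarrow> real" where
  "lap u z = 4 * Re (trace (matrix_inv (gmat z) ** hessC u z))"

definition Xop :: "(complex^'n::finite \<Rightarrow> real) \<Rightarrow> complex^'n \<Rightarrow> real" where
  "Xop u z = -2 * frechet_derivative u (at z) z"

definition gR :: "complex^'n::finite \<Rightarrow> complex^'n \<Rightarrow> complex^'n \<Rightarrow> real" where
  "gR z a b = Re (\<Sum>j\<in>UNIV. \<Sum>k\<in>UNIV. gmat z $ j $ k * a $ j * cnj (b $ k))"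

text \<open>Christoffel symbols of the Levi-Civita connection (for constant vector fields a, b).\<close>
definition Gam :: "complex^'n::finite \<Rightarrow> complex^'n \<Rightarrow> complex^'n \<Rightarrow> complex^'n" where
  "Gam z a b = (THE e. \<forall>c. gR z e c =
      (frechet_derivative (\<lambda>y. gR y b c) (at z) a + frechet_derivative (\<lambda>y. gR y a c) (at z) b
       - frechet_derivative (\<lambda>y. gR y a b) (at z) c) / 2)"

definition covHess :: "(complex^'n::finite \<Rightarrow> real) \<Rightarrow> complex^'n \<Rightarrow> complex^'n \<Rightarrow> complex^'n \<Rightarrow> real" where
  "covHess v z a b = D2 v z a b - frechet_derivative v (at z) (Gam z a b)"

definition C2_bounded :: "(complex^'n::finite) set \<Rightarrow> (complex^'n \<Rightarrow> real) \<Rightarrow> bool" where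
  "C2_bounded S v \<longleftrightarrow> (\<exists>M. \<forall>z\<in>S.
      \<bar>v z\<bar> \<le> M \<and>
      (\<forall>a. \<bar>frechet_derivative v (at z) a\<bar> \<le> M * sqrt (gR z a a)) \<and>
      (\<forall>a b. \<bar>covHess v z a b\<bar> \<le> M * sqrt (gR z a a) * sqrt (gR z b b)))"

definition C2_delta :: "real \<Rightarrow> (complex^'n::finite) set \<Rightarrow> (complex^'n \<Rightarrow> real) \<Rightarrow> bool" where
  "C2_delta \<delta> S u \<longleftrightarrow> C2_on S u \<and> C2_bounded S (\<lambda>z. wgt \<delta> z * u z)"

definition esup :: "'a set \<Rightarrow> ('a \<Rightarrow> real) \<Rightarrow> ereal" where
  "esup A f = (SUP z\<in>A. ereal (f z))"

end

theory Submission
  imports Defs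
begin


lemma Fpol_Suc: "Fpol (Suc n) s = s ^ n - real n * Fpol n s"
proof -
  have "Fpol (Suc n) s = (\<Sum>j<Suc n. (-1) ^ (n - j) * (fact n / fact j) * s ^ j)"
    by (simp add: Fpol_def)
  also have "\<dots> = (\<Sum>j<n. (-1) ^ (n - j) * (fact n / fact j) * s ^ j) + s ^ n"
    by simp
  also have "(\<Sum>j<n. (-1) ^ (n - j) * (fact n / fact j) * s ^ j) = - real n * Fpol n s"
    unfolding Fpol_def sum_distrib_left
  proof (rule sum.cong[OF refl])
    fix j assume "j \<in> {..<n}"
    then have j: "j < n" by simp
    then obtain m where n: "n = Suc m" by (cases n) auto
    have e: "n - j = Suc (n - j - 1)" using j by simp
    have f: "(fact n :: real) = real n * fact (n - 1)" using n by simp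
    show "(-1) ^ (n - j) * (fact n / fact j) * s ^ j = - real n * ((-1) ^ (n - j - 1) * (fact (n - 1) / fact j) * s ^ j)"
      by (subst e, subst f) (simp add: field_simps)
  qed
  finally show ?thesis by simp
qed

lemma Fpol_deriv: "n \<ge> 1 \<Longrightarrow> (Fpol n has_real_derivative (s ^ (n - 1) - Fpol n s)) (at s)"
proof (induction n rule: nat_induct_at_least)
  case base
  have "Fpol 1 = (\<lambda>s. 1)" by (auto simp: Fpol_def)
  then show ?case by simp
next
  case (Suc n)
  have eq: "Fpol (Suc n) = (\<lambda>s. s ^ n - real n * Fpol n s)" using Fpol_Suc by auto
  have "((\<lambda>s. s ^ n - real n * Fpol n s) has_real_derivative
        (real n * s ^ (n - 1) - real n * (s ^ (n - 1) - Fpol n s))) (at s)"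
    by (auto intro!: derivative_eq_intros Suc.IH)
  moreover have "real n * s ^ (n - 1) - real n * (s ^ (n - 1) - Fpol n s) = s ^ (Suc n - 1) - Fpol (Suc n) s"
    by (simp add: Fpol_Suc algebra_simps)
  ultimately show ?case by (simp add: eq)
qed

definition G :: "nat \<Rightarrow> real \<Rightarrow> real" where "G n s = Fpol n s * exp s"

lemma G_deriv: "n \<ge> 1 \<Longrightarrow> (G n has_real_derivative (s ^ (n - 1) * exp s)) (at s)"
proof -
  assume n: "n \<ge> 1"
  have "((\<lambda>s. Fpol n s * exp s) has_real_derivative ((s ^ (n - 1) - Fpol n s) * exp s + Fpol n s * exp s)) (at s)"
    using DERIV_mult[OF Fpol_deriv[OF n] DERIV_exp, of s] by (simp add: algebra_simps)
  then show ?thesis unfolding G_def by (simp add: algebra_simps)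
qed


lemma G_cont: "n \<ge> 1 \<Longrightarrow> continuous_on S (G n)"
  by (meson DERIV_isCont G_deriv continuous_at_imp_continuous_on)

lemma G_strict: assumes n: "n \<ge> 1" and "0 \<le> a" "a < b" shows "G n a < G n b"
proof (rule DERIV_pos_imp_increasing_open[OF \<open>a < b\<close>])
  fix x assume "a < x" "x < b"
  then have "x > 0" using assms by simp
  then show "\<exists>y. (G n has_real_derivative y) (at x) \<and> 0 < y"
    using G_deriv[OF n, of x] by (intro exI[of _ "x ^ (n - 1) * exp x"]) auto
qed (rule G_cont[OF n])

lemma G_lower: assumes n: "n \<ge> 1" and s: "0 \<le> s" shows "s ^ n / real n \<le> G n s - G n 0"
proof -
  let ?f = "\<lambda>s. G n s - G n 0 - s ^ n / real n"
  have d: "(?f has_real_derivative (s ^ (n - 1) * exp s - s ^ (n - 1))) (at s)" for s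
  proof -
    have "(?f has_real_derivative (s ^ (n - 1) * exp s - 0 - real n * s ^ (n - 1) / real n)) (at s)"
      using n by (auto intro!: derivative_eq_intros G_deriv)
    then show ?thesis using n by simp
  qed
  have "?f 0 \<le> ?f s"
  proof (rule DERIV_nonneg_imp_increasing_open[OF s])
    fix x assume "0 < x" "x < s"
    then show "\<exists>y. (?f has_real_derivative y) (at x) \<and> 0 \<le> y"
      using d[of x] by (intro exI[of _ "x ^ (n - 1) * exp x - x ^ (n - 1)"])
        (auto simp: mult_le_cancel_left1 simp del: exp_le_one_iff)
  next
    show "continuous_on {0..s} ?f" using d by (meson DERIV_isCont continuous_at_imp_continuous_on)
  qed
  then show ?thesis using n by (simp add: power_0_left)
qed

lemma G_upper1: assumes n: "n \<ge> 1" and s: "0 \<le> s" shows "real n * (G n s - G n 0) \<le> s ^ n * exp s"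
proof -
  let ?f = "\<lambda>s. s ^ n * exp s - real n * (G n s - G n 0)"
  have d: "(?f has_real_derivative (s ^ n * exp s)) (at s)" for s
  proof -
    have "(?f has_real_derivative (real n * s ^ (n - 1) * exp s + s ^ n * exp s - real n * (s ^ (n - 1) * exp s - 0))) (at s)"
      by (auto intro!: derivative_eq_intros G_deriv[OF n])
    then show ?thesis by (simp add: algebra_simps)
  qed
  have "?f 0 \<le> ?f s"
  proof (rule DERIV_nonneg_imp_increasing_open[OF s])
    fix x assume "0 < x" "x < s"
    then show "\<exists>y. (?f has_real_derivative y) (at x) \<and> 0 \<le> y"
      using d[of x] by (intro exI[of _ "x ^ n * exp x"]) auto
  next
    show "continuous_on {0..s} ?f" using d by (meson DERIV_isCont continuous_at_imp_continuous_on)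
  qed
  then show ?thesis using n by (simp add: power_0_left)
qed

lemma G_upper2: assumes n: "n \<ge> 1" and s: "0 \<le> s" shows "G n s - G n 0 \<le> s ^ (n - 1) * (exp s - 1)"
proof -
  let ?f = "\<lambda>s. s ^ (n - 1) * (exp s - 1) - (G n s - G n 0)"
  have d: "(?f has_real_derivative (real (n - 1) * s ^ (n - 1 - 1) * (exp s - 1))) (at s)" for s
  proof -
    have "(?f has_real_derivative (real (n - 1) * s ^ (n - 1 - 1) * (exp s - 1) + s ^ (n - 1) * exp s - (s ^ (n - 1) * exp s - 0))) (at s)"
      by (auto intro!: derivative_eq_intros G_deriv[OF n])
    then show ?thesis by (simp add: algebra_simps)
  qed
  have "?f 0 \<le> ?f s"
  proof (rule DERIV_nonneg_imp_increasing_open[OF s])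
    fix x assume "0 < x" "x < s"
    then show "\<exists>y. (?f has_real_derivative y) (at x) \<and> 0 \<le> y"
      using d[of x] by (intro exI[of _ "real (n - 1) * x ^ (n - 1 - 1) * (exp x - 1)"]) auto
  next
    show "continuous_on {0..s} ?f" using d by (meson DERIV_isCont continuous_at_imp_continuous_on)
  qed
  then show ?thesis using n by simp
qed

lemma G0: "G n 0 = Fpol n 0" by (simp add: G_def)

lemma phi_ex1: assumes n: "n \<ge> 1"
  shows "\<exists>!s. 0 < s \<and> Fpol n s * exp s = exp (real n * t) / real n + Fpol n 0"
proof -
  let ?y = "exp (real n * t) / real n + G n 0"
  define S where "S = max 1 (real n * (exp (real n * t) / real n))"
  have S1: "S \<ge> 1" by (simp add: S_def)
  have "S / real n \<le> S ^ n / real n" using S1 n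
    by (intro divide_right_mono) (auto intro: order_trans[OF _ power_increasing[of 1 n S]])
  then have "S / real n \<le> G n S - G n 0" using G_lower[OF n, of S] S1 by linarith
  moreover have "exp (real n * t) / real n \<le> S / real n" using n by (auto simp: S_def divide_right_mono)
  ultimately have hi: "?y \<le> G n S" by linarith
  have lo: "G n 0 \<le> ?y" by simp
  obtain x where x: "0 \<le> x" "x \<le> S" "G n x = ?y"
    using IVT'[of "G n" 0 ?y S, OF lo hi] S1 G_cont[OF n] by auto
  have "x \<noteq> 0" using x(3) n by auto
  then have xp: "x > 0" using x by simp
  show ?thesis
  proof (rule ex1I[of _ x])
    show "0 < x \<and> Fpol n x * exp x = exp (real n * t) / real n + Fpol n 0"
      using xp x(3) by (simp add: G_def)
  next
    fix y assume y: "0 < y \<and> Fpol n y * exp y = exp (real n * t) / real n + Fpol n 0"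
    then have "G n y = G n x" using x(3) by (simp add: G_def)
    then show "y = x" using G_strict[OF n, of x y] G_strict[OF n, of y x] xp y
      by (cases "x < y"; cases "y < x") auto
  qed
qed

lemma phi_prop: assumes n: "n \<ge> 1"
  shows "0 < phi n t" "G n (phi n t) - G n 0 = exp (real n * t) / real n"
proof -
  have "0 < phi n t \<and> Fpol n (phi n t) * exp (phi n t) = exp (real n * t) / real n + Fpol n 0"
    unfolding phi_def by (rule theI'[OF phi_ex1[OF n]])
  then show "0 < phi n t" "G n (phi n t) - G n 0 = exp (real n * t) / real n"
    by (auto simp: G_def)
qed

lemma phi_unique: assumes n: "n \<ge> 1" and "0 < s" "G n s - G n 0 = exp (real n * t) / real n"
  shows "phi n t = s"
proof -
  have "0 < s \<and> Fpol n s * exp s = exp (real n * t) / real n + Fpol n 0"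
    using assms by (auto simp: G_def)
  then show ?thesis unfolding phi_def using phi_ex1[OF n] by (rule the1_equality[rotated])
qed


definition T :: "nat \<Rightarrow> real \<Rightarrow> real" where
  "T n s = ln (real n * (G n s - G n 0)) / real n"

definition phi1 :: "nat \<Rightarrow> real \<Rightarrow> real" where
  "phi1 n t = exp (real n * t) / (phi n t ^ (n - 1) * exp (phi n t))"

lemma Gpos: "n \<ge> 1 \<Longrightarrow> 0 < s \<Longrightarrow> G n s - G n 0 > 0"
  using G_strict[of n 0 s] by simp

lemma phi_T: assumes n: "n \<ge> 1" and s: "0 < s" shows "phi n (T n s) = s"
proof (rule phi_unique[OF n s])
  have "real n * (G n s - G n 0) > 0" using Gpos[OF n s] n by simp
  then show "G n s - G n 0 = exp (real n * T n s) / real n"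
    using n by (simp add: T_def)
qed

lemma T_phi: assumes n: "n \<ge> 1" shows "T n (phi n t) = t"
  using phi_prop[OF n, of t] n by (simp add: T_def)

lemma T_deriv: assumes n: "n \<ge> 1" and s: "0 < s"
  shows "(T n has_real_derivative (s ^ (n - 1) * exp s / (real n * (G n s - G n 0)))) (at s)"
proof -
  have p: "real n * (G n s - G n 0) > 0" using Gpos[OF n s] n by simp
  have d1: "((\<lambda>s. real n * (G n s - G n 0)) has_real_derivative (real n * (s^(n-1)*exp s - 0))) (at s)"
    by (intro DERIV_cmult DERIV_diff G_deriv[OF n] DERIV_const)
  have d2: "((\<lambda>s. ln (real n * (G n s - G n 0))) has_real_derivative (1 / (real n * (G n s - G n 0)) * (real n * (s^(n-1)*exp s - 0)))) (at s)"
    by (rule DERIV_chain2[OF DERIV_ln_divide[OF p] d1])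
  note d3 = DERIV_cdivide[OF d2, of "real n"]
  have e: "1 / (real n * (G n s - G n 0)) * (real n * (s^(n-1)*exp s - 0)) / real n = s ^ (n - 1) * exp s / (real n * (G n s - G n 0))"
    using n p by (simp add: field_simps)
  show ?thesis unfolding T_def[abs_def] using d3 unfolding e .
qed

lemma T_cont: assumes n: "n \<ge> 1" and s: "0 < s" shows "isCont (T n) s"
  using T_deriv[OF n s] DERIV_isCont by blast

lemma phi_cont: assumes n: "n \<ge> 1" shows "isCont (phi n) t"
proof -
  let ?x = "phi n t"
  have x: "?x > 0" using phi_prop[OF n] by simp
  have "isCont (phi n) (T n ?x)"
    by (rule isCont_inverse_function2[of "?x/2" ?x "?x + 1"]) (use x n in \<open>auto intro: phi_T T_cont\<close>)
  then show ?thesis using T_phi[OF n] by simp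
qed

lemma phi_deriv: assumes n: "n \<ge> 1" shows "(phi n has_real_derivative phi1 n t) (at t)"
proof -
  let ?x = "phi n t"
  have x: "?x > 0" using phi_prop[OF n] by simp
  have e: "real n * (G n ?x - G n 0) = exp (real n * t)" using phi_prop[OF n, of t] n by simp
  have "(phi n has_real_derivative inverse (?x ^ (n - 1) * exp ?x / (real n * (G n ?x - G n 0)))) (at t)"
  proof (rule DERIV_inverse_function[where f="T n" and a="t - 1" and b="t + 1"])
    show "(T n has_real_derivative ?x ^ (n - 1) * exp ?x / (real n * (G n ?x - G n 0))) (at ?x)"
      by (rule T_deriv[OF n x])
    show "?x ^ (n - 1) * exp ?x / (real n * (G n ?x - G n 0)) \<noteq> 0"
      using Gpos[OF n x] x n by simp
  qed (use n in \<open>auto intro: phi_cont simp: T_phi\<close>)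
  then show ?thesis unfolding e phi1_def by (simp add: field_simps)
qed

lemma phi1_pos: "n \<ge> 1 \<Longrightarrow> phi1 n t > 0"
  using phi_prop by (simp add: phi1_def)

lemma phi1_le_phi: assumes n: "n \<ge> 1" shows "phi1 n t \<le> phi n t"
proof -
  let ?x = "phi n t"
  have x: "?x > 0" using phi_prop[OF n] by simp
  have e: "real n * (G n ?x - G n 0) = exp (real n * t)" using phi_prop[OF n, of t] n by simp
  have "exp (real n * t) \<le> ?x ^ n * exp ?x" using G_upper1[OF n, of ?x] x e by simp
  also have "\<dots> = ?x * (?x ^ (n - 1) * exp ?x)" using n by (cases n) auto
  finally show ?thesis using x unfolding phi1_def by (simp add: divide_le_eq)
qed

lemma phi1_le_n: assumes n: "n \<ge> 1" shows "phi1 n t \<le> real n"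
proof -
  let ?x = "phi n t"
  have x: "?x > 0" using phi_prop[OF n] by simp
  have e: "real n * (G n ?x - G n 0) = exp (real n * t)" using phi_prop[OF n, of t] n by simp
  have "G n ?x - G n 0 \<le> ?x ^ (n - 1) * (exp ?x - 1)" using G_upper2[OF n, of ?x] x by simp
  also have "\<dots> \<le> ?x ^ (n - 1) * exp ?x" using x by (simp add: mult_left_mono)
  finally have "exp (real n * t) \<le> real n * (?x ^ (n - 1) * exp ?x)" using e n
    by (metis mult_left_mono of_nat_0_le_iff)
  then show ?thesis using x unfolding phi1_def by (simp add: divide_le_eq)
qed

lemma phi_le_exp: assumes n: "n \<ge> 1" shows "phi n t \<le> exp t"
proof -
  let ?x = "phi n t"
  have x: "?x > 0" using phi_prop[OF n] by simp
  have "?x ^ n / real n \<le> exp (real n * t) / real n" using G_lower[OF n, of ?x] phi_prop[OF n, of t] x by simp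
  then have "?x ^ n \<le> exp t ^ n" using n by (simp add: divide_le_cancel exp_of_nat_mult)
  moreover have "Suc (n - 1) = n" using n by simp
  ultimately show ?thesis using power_le_imp_le_base[of "phi n t" "n - 1" "exp t"] by simp
qed

lemma phi_big: assumes n: "n \<ge> 1" and C: "C > 0" and t: "t \<ge> ln (C ^ n * exp C) / real n"
  shows "phi n t \<ge> C"
proof (rule ccontr)
  let ?x = "phi n t"
  assume "\<not> C \<le> ?x"
  then have lt: "?x < C" by simp
  have x: "?x > 0" using phi_prop[OF n] by simp
  have e: "real n * (G n ?x - G n 0) = exp (real n * t)" using phi_prop[OF n, of t] n by simp
  have "exp (real n * t) \<le> ?x ^ n * exp ?x" using G_upper1[OF n, of ?x] x e by simp
  also have "\<dots> < C ^ n * exp C" using lt x n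
    by (intro mult_strict_mono power_strict_mono) auto
  finally have "ln (exp (real n * t)) < ln (C ^ n * exp C)" using C by (subst ln_less_cancel_iff) auto
  then have "real n * t < ln (C ^ n * exp C)" by simp
  then show False using t n by (simp add: divide_le_eq mult.commute)
qed



definition phi2 :: "nat \<Rightarrow> real \<Rightarrow> real" where
  "phi2 n t = phi1 n t * (real n - phi1 n t - (real n - 1) * (phi1 n t / phi n t))"

lemma phi1_alt: assumes n: "n \<ge> 1"
  shows "phi1 n t = exp (real n * t - phi n t - (real n - 1) * ln (phi n t))"
proof -
  have x: "phi n t > 0" using phi_prop[OF n] by simp
  have "exp ((real n - 1) * ln (phi n t)) = phi n t powr (real (n - 1))"
    using x n by (simp add: powr_def of_nat_diff)
  also have "\<dots> = phi n t ^ (n - 1)" using x by (simp add: powr_realpow)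
  finally have e: "exp ((real n - 1) * ln (phi n t)) = phi n t ^ (n - 1)" .
  have "exp (real n * t - phi n t - (real n - 1) * ln (phi n t))
      = exp (real n * t) / exp (phi n t) / exp ((real n - 1) * ln (phi n t))"
    by (simp add: exp_diff)
  then show ?thesis unfolding phi1_def e by simp
qed

lemma phi1_deriv: assumes n: "n \<ge> 1" shows "(phi1 n has_real_derivative phi2 n t) (at t)"
proof -
  have x: "phi n t > 0" using phi_prop[OF n] by simp
  have d: "((\<lambda>t. exp (real n * t - phi n t - (real n - 1) * ln (phi n t))) has_real_derivative
     exp (real n * t - phi n t - (real n - 1) * ln (phi n t)) * (real n - phi1 n t - (real n - 1) * (phi1 n t / phi n t))) (at t)"
    using x by (auto intro!: derivative_eq_intros phi_deriv[OF n] simp: field_simps)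
  have eq: "phi1 n = (\<lambda>t. exp (real n * t - phi n t - (real n - 1) * ln (phi n t)))"
    using phi1_alt[OF n] by auto
  show ?thesis using d unfolding eq phi2_def using phi1_alt[OF n, of t] by simp
qed


definition Pf :: "nat \<Rightarrow> real \<Rightarrow> real" where "Pf n \<sigma> = phi n (ln \<sigma>) / \<sigma>"

lemma Pf_bound: assumes n: "n \<ge> 1" and "0 \<le> \<sigma>" shows "\<bar>Pf n \<sigma>\<bar> \<le> 1"
proof (cases "\<sigma> = 0")
  case False
  then have s: "\<sigma> > 0" using assms by simp
  have "phi n (ln \<sigma>) \<le> \<sigma>" using phi_le_exp[OF n, of "ln \<sigma>"] s by simp
  moreover have "phi n (ln \<sigma>) > 0" using phi_prop[OF n] by simp
  ultimately show ?thesis using s by (simp add: Pf_def abs_le_iff divide_le_eq)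
qed (simp add: Pf_def)

lemma Pf_meas: assumes n: "n \<ge> 1" shows "Pf n \<in> borel_measurable (lebesgue_on S)"
proof -
  have c: "phi n \<in> borel_measurable borel"
    by (rule borel_measurable_continuous_onI) (simp add: continuous_at_imp_continuous_on phi_cont[OF n])
  have "Pf n \<in> borel_measurable borel" unfolding Pf_def[abs_def] using c by measurable
  from measurable_comp[OF id_borel_measurable_lebesgue_on this] show ?thesis by (simp add: o_def)
qed

lemma Pf_integrable: assumes n: "n \<ge> 1" and that: "0 \<le> a" shows "Pf n integrable_on {a..b}"
proof (rule measurable_bounded_by_integrable_imp_integrable_real[where g="\<lambda>_. 1"])
  show "Pf n \<in> borel_measurable (lebesgue_on {a..b})" by (rule Pf_meas[OF n])
  show "(\<lambda>_. 1::real) integrable_on {a..b}" by (rule integrable_const_ivl)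
  show "\<And>x. x \<in> {a..b} \<Longrightarrow> \<bar>Pf n x\<bar> \<le> 1" using Pf_bound[OF n] that by auto
qed simp

lemma Pf_isCont: assumes n: "n \<ge> 1" and s: "s > 0" shows "isCont (Pf n) s"
proof -
  have "isCont (\<lambda>\<sigma>. phi n (ln \<sigma>)) s" by (rule isCont_o2[OF isCont_ln phi_cont[OF n]]) (use s in auto)
  then show ?thesis unfolding Pf_def[abs_def] using s by (intro isCont_divide) auto
qed

definition P :: "nat \<Rightarrow> real \<Rightarrow> real" where "P n s = integral {0..s} (Pf n)"

lemma P_deriv: assumes n: "n \<ge> 1" and s: "s > 0" shows "(P n has_real_derivative Pf n s) (at s)"
proof -
  define cc where "cc = s / 2"
  have cc: "0 < cc" "cc < s" using s by (auto simp: cc_def)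
  have cont: "continuous_on {cc..(2 * s)} (Pf n)"
    using cc by (intro continuous_at_imp_continuous_on ballI Pf_isCont[OF n]) auto
  have "((\<lambda>x. integral {cc..x} (Pf n)) has_real_derivative Pf n s) (at s within {cc..(2 * s)})"
    by (rule integral_has_real_derivative[OF cont]) (use cc in auto)
  moreover have "s \<in> interior {cc..(2 * s)}" using cc s by (simp add: interior_atLeastAtMost_real)
  ultimately have d: "((\<lambda>x. integral {cc..x} (Pf n)) has_real_derivative Pf n s) (at s)"
    by (metis at_within_interior)
  have d2: "((\<lambda>x. integral {0..cc} (Pf n) + integral {cc..x} (Pf n)) has_real_derivative Pf n s) (at s)"
    using DERIV_add[OF DERIV_const d] by simp
  show ?thesis
  proof (rule has_field_derivative_transform_within_open[OF d2, of "{cc<..}"])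
    fix x assume "x \<in> {cc<..}"
    then show "integral {0..cc} (Pf n) + integral {cc..x} (Pf n) = P n x"
      unfolding P_def using cc by (intro Henstock_Kurzweil_Integration.integral_combine Pf_integrable[OF n]) auto
  qed (use cc in simp_all)
qed

definition Pf1 :: "nat \<Rightarrow> real \<Rightarrow> real" where
  "Pf1 n \<sigma> = (phi1 n (ln \<sigma>) - phi n (ln \<sigma>)) / \<sigma>\<^sup>2"

lemma Pf_deriv: assumes n: "n \<ge> 1" and s: "s > 0" shows "(Pf n has_real_derivative Pf1 n s) (at s)"
proof -
  have "((\<lambda>\<sigma>. phi n (ln \<sigma>) / \<sigma>) has_real_derivative
        ((phi1 n (ln s) * (1 / s)) * s - phi n (ln s) * 1) / (s * s)) (at s)"
    by (rule DERIV_divide[OF DERIV_chain2[OF phi_deriv[OF n] DERIV_ln_divide[OF s]] DERIV_ident]) (use s in simp)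
  then show ?thesis unfolding Pf_def[abs_def] Pf1_def using s by (simp add: field_simps power2_eq_square)
qed



lemma radial_d1:
  fixes y :: "complex^'n::finite" and H H1 :: "real \<Rightarrow> real"
  assumes dH: "\<And>s. s > 0 \<Longrightarrow> (H has_real_derivative H1 s) (at s)" and y: "y \<noteq> 0"
  shows "((\<lambda>y. H (y \<bullet> y)) has_derivative (\<lambda>v. 2 * H1 (y \<bullet> y) * (y \<bullet> v))) (at y)"
proof -
  have p: "y \<bullet> y > 0" using y by simp
  have "((\<lambda>y. y \<bullet> y) has_derivative (\<lambda>v. y \<bullet> v + v \<bullet> y)) (at y)"
    by (auto intro!: derivative_eq_intros)
  from DERIV_compose_FDERIV[OF dH[OF p] this]
  show ?thesis by (rule has_derivative_eq_rhs) (auto simp: inner_commute algebra_simps)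
qed

lemma radial_fd:
  fixes y :: "complex^'n::finite" and H H1 :: "real \<Rightarrow> real"
  assumes dH: "\<And>s. s > 0 \<Longrightarrow> (H has_real_derivative H1 s) (at s)" and y: "y \<noteq> 0"
  shows "frechet_derivative (\<lambda>y. H (y \<bullet> y)) (at y) = (\<lambda>v. 2 * H1 (y \<bullet> y) * (y \<bullet> v))"
  using frechet_derivative_at[OF radial_d1[OF dH y]] by simp

lemma radial_d2:
  fixes z :: "complex^'n::finite" and H H1 H2 :: "real \<Rightarrow> real"
  assumes dH: "\<And>s. s > 0 \<Longrightarrow> (H has_real_derivative H1 s) (at s)"
    and dH1: "\<And>s. s > 0 \<Longrightarrow> (H1 has_real_derivative H2 s) (at s)" and z: "z \<noteq> 0"
  shows "((\<lambda>y. frechet_derivative (\<lambda>y. H (y \<bullet> y)) (at y) v) has_derivative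
          (\<lambda>w. 4 * H2 (z \<bullet> z) * (z \<bullet> v) * (z \<bullet> w) + 2 * H1 (z \<bullet> z) * (v \<bullet> w))) (at z)"
proof -
  have p: "z \<bullet> z > 0" using z by simp
  have "((\<lambda>y. y \<bullet> y) has_derivative (\<lambda>w. z \<bullet> w + w \<bullet> z)) (at z)"
    by (auto intro!: derivative_eq_intros)
  from DERIV_compose_FDERIV[OF dH1[OF p] this]
  have a: "((\<lambda>y. H1 (y \<bullet> y)) has_derivative (\<lambda>w. (z \<bullet> w + w \<bullet> z) * H2 (z \<bullet> z))) (at z)" .
  have b: "((\<lambda>y. y \<bullet> v) has_derivative (\<lambda>w. w \<bullet> v)) (at z)"
    by (auto intro!: derivative_eq_intros)
  have c: "((\<lambda>y. 2 * H1 (y \<bullet> y) * (y \<bullet> v)) has_derivative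
          (\<lambda>w. 4 * H2 (z \<bullet> z) * (z \<bullet> v) * (z \<bullet> w) + 2 * H1 (z \<bullet> z) * (v \<bullet> w))) (at z)"
    by (rule has_derivative_eq_rhs, rule has_derivative_mult[OF has_derivative_mult[OF has_derivative_const a] b])
      (auto simp: inner_commute algebra_simps)
  show ?thesis
  proof (rule has_derivative_transform_within_open[OF c, of "-{0}"])
    fix y :: "complex^'n" assume "y \<in> -{0}"
    then show "2 * H1 (y \<bullet> y) * (y \<bullet> v) = frechet_derivative (\<lambda>y. H (y \<bullet> y)) (at y) v"
      by (subst radial_fd[OF dH]) auto
  qed (use z in auto)
qed

lemma radial_D2:
  fixes z :: "complex^'n::finite" and H H1 H2 :: "real \<Rightarrow> real"
  assumes dH: "\<And>s. s > 0 \<Longrightarrow> (H has_real_derivative H1 s) (at s)"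
    and dH1: "\<And>s. s > 0 \<Longrightarrow> (H1 has_real_derivative H2 s) (at s)" and z: "z \<noteq> 0"
  shows "D2 (\<lambda>y. H (y \<bullet> y)) z v w = 4 * H2 (z \<bullet> z) * (z \<bullet> v) * (z \<bullet> w) + 2 * H1 (z \<bullet> z) * (v \<bullet> w)"
  unfolding D2_def using frechet_derivative_at[OF radial_d2[OF dH dH1 z, of v], symmetric] by simp

lemma axis_nth_neq: "i \<noteq> j \<Longrightarrow> axis i x $ j = 0"
  by (simp add: axis_def)

lemma radial_hessC:
  fixes z :: "complex^'n::finite" and H H1 H2 :: "real \<Rightarrow> real"
  assumes dH: "\<And>s. s > 0 \<Longrightarrow> (H has_real_derivative H1 s) (at s)"
    and dH1: "\<And>s. s > 0 \<Longrightarrow> (H1 has_real_derivative H2 s) (at s)" and z: "z \<noteq> 0"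
  shows "hessC (\<lambda>y. H (y \<bullet> y)) z = (\<chi> i j. complex_of_real (H1 (z \<bullet> z)) * (if i = j then 1 else 0)
             + complex_of_real (H2 (z \<bullet> z)) * cnj (z $ i) * z $ j)"
  unfolding hessC_def
  by (auto simp: radial_D2[OF dH dH1 z] vec_eq_iff complex_eq_iff inner_axis inner_axis_axis inner_complex_def algebra_simps axis_nth_neq diff_divide_distrib add_divide_distrib)



definition iv :: "complex^'n::finite \<Rightarrow> complex^'n" where "iv z = (\<chi> k. \<i> * z $ k)"

lemma bil_expand:
  fixes B :: "'a::real_vector \<Rightarrow> 'a \<Rightarrow> real" and I :: "'i set"
  assumes B: "bilinear B" and fin: "finite I"
  shows "B (\<Sum>k\<in>I. a k *\<^sub>R u k + b k *\<^sub>R w k) (\<Sum>i\<in>I. c i *\<^sub>R u i + d i *\<^sub>R w i)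
       = (\<Sum>k\<in>I. \<Sum>i\<in>I. a k * c i * B (u k) (u i) + a k * d i * B (u k) (w i)
                        + b k * c i * B (w k) (u i) + b k * d i * B (w k) (w i))"
proof -
  have "B (\<Sum>k\<in>I. a k *\<^sub>R u k + b k *\<^sub>R w k) (\<Sum>i\<in>I. c i *\<^sub>R u i + d i *\<^sub>R w i)
      = (\<Sum>(k,i)\<in>I \<times> I. B (a k *\<^sub>R u k + b k *\<^sub>R w k) (c i *\<^sub>R u i + d i *\<^sub>R w i))"
    by (rule bilinear_sum[OF B])
  also have "\<dots> = (\<Sum>k\<in>I. \<Sum>i\<in>I. B (a k *\<^sub>R u k + b k *\<^sub>R w k) (c i *\<^sub>R u i + d i *\<^sub>R w i))"
    by (simp add: sum.cartesian_product)
  also have "\<dots> = (\<Sum>k\<in>I. \<Sum>i\<in>I. a k * c i * B (u k) (u i) + a k * d i * B (u k) (w i)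
                        + b k * c i * B (w k) (u i) + b k * d i * B (w k) (w i))"
    by (simp add: bilinear_ladd[OF B] bilinear_radd[OF B] bilinear_lmul[OF B] bilinear_rmul[OF B] algebra_simps)
  finally show ?thesis .
qed

lemma z_decomp: "(z::complex^'n::finite) = (\<Sum>k\<in>UNIV. Re (z$k) *\<^sub>R axis k 1 + Im (z$k) *\<^sub>R axis k \<i>)"
  by (simp add: vec_eq_iff axis_def complex_eq_iff if_distrib cong: if_cong)

lemma iz_decomp: "iv (z::complex^'n::finite) = (\<Sum>k\<in>UNIV. (- Im (z$k)) *\<^sub>R axis k 1 + Re (z$k) *\<^sub>R axis k \<i>)"
  by (simp add: iv_def vec_eq_iff axis_def complex_eq_iff if_distrib cong: if_cong)

lemma ReQ:
  fixes z :: "complex^'n::finite"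
  assumes B: "bilinear (D2 f z)"
  shows "Re (\<Sum>i\<in>UNIV. \<Sum>k\<in>UNIV. cnj (z$i) * z$k * hessC f z $ k $ i)
       = (D2 f z z z + D2 f z (iv z) (iv z)) / 4"
proof -
  let ?B = "D2 f z"
  have fU: "finite (UNIV :: 'n set)" by simp
  let ?x = "\<lambda>k. Re (z$k)" and ?y = "\<lambda>k. Im (z$k)"
  let ?e = "\<lambda>k. axis k (1::complex) :: complex^'n" and ?g = "\<lambda>k. axis k \<i> :: complex^'n"
  have "?B z z + ?B (iv z) (iv z) =
     (\<Sum>k\<in>UNIV. \<Sum>i\<in>UNIV. ?x k * ?x i * ?B (?e k) (?e i) + ?x k * ?y i * ?B (?e k) (?g i)
                        + ?y k * ?x i * ?B (?g k) (?e i) + ?y k * ?y i * ?B (?g k) (?g i))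
   + (\<Sum>k\<in>UNIV. \<Sum>i\<in>UNIV. (- ?y k) * (- ?y i) * ?B (?e k) (?e i) + (- ?y k) * ?x i * ?B (?e k) (?g i)
                        + ?x k * (- ?y i) * ?B (?g k) (?e i) + ?x k * ?x i * ?B (?g k) (?g i))"
    by (subst (1 2) z_decomp, subst (1 2) iz_decomp, simp only: bil_expand[OF B fU])
  also have "\<dots> = (\<Sum>k\<in>UNIV. \<Sum>i\<in>UNIV. (?x k * ?x i + ?y k * ?y i) * (?B (?e k) (?e i) + ?B (?g k) (?g i))
                 + (?x k * ?y i - ?y k * ?x i) * (?B (?e k) (?g i) - ?B (?g k) (?e i)))"
    by (simp add: sum.distrib[symmetric] algebra_simps)
  also have "\<dots> = 4 * Re (\<Sum>k\<in>UNIV. \<Sum>i\<in>UNIV. cnj (z$i) * z$k * hessC f z $ k $ i)"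
    apply (simp add: hessC_def sum_distrib_left)
    apply (intro sum.cong refl)
    apply (simp add: field_simps)
    done
  also have "(\<Sum>k\<in>UNIV. \<Sum>i\<in>UNIV. cnj (z$i) * z$k * hessC f z $ k $ i) = (\<Sum>i\<in>UNIV. \<Sum>k\<in>UNIV. cnj (z$i) * z$k * hessC f z $ k $ i)"
    by (rule sum.swap)
  finally show ?thesis by simp
qed

lemma ReTr:
  fixes z :: "complex^'n::finite"
  shows "Re (\<Sum>i\<in>UNIV. hessC f z $ i $ i)
       = (\<Sum>i\<in>UNIV. D2 f z (axis i 1) (axis i 1) + D2 f z (axis i \<i>) (axis i \<i>)) / 4"
  by (simp add: hessC_def sum_divide_distrib)


lemma matrix_inv_eq:
  fixes A B :: "complex^'n::finite^'n"
  assumes "A ** B = mat 1" "B ** A = mat 1"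
  shows "matrix_inv A = B"
proof -
  have ex: "\<exists>B'. A ** B' = mat 1 \<and> B' ** A = mat 1" using assms by blast
  define B' where "B' = matrix_inv A"
  have B': "A ** B' = mat 1 \<and> B' ** A = mat 1"
    unfolding B'_def matrix_inv_def by (rule someI_ex[OF ex])
  have "B' = B' ** (A ** B)" using assms by simp
  also have "\<dots> = (B' ** A) ** B" by (simp add: matrix_mul_assoc)
  also have "\<dots> = B" using B' by simp
  finally show ?thesis unfolding B'_def .
qed

lemma rank1_mul:
  fixes z :: "complex^'n::finite"
  shows "(\<chi> i j. a * (if i = j then 1 else 0) + b * cnj (z$i) * z$j) ** (\<chi> i j. c * (if i = j then 1 else 0) + d * cnj (z$i) * z$j)
   = (\<chi> i j. (a * c) * (if i = j then 1 else 0) + (a * d + b * c + b * d * (\<Sum>k\<in>UNIV. z$k * cnj (z$k))) * cnj (z$i) * z$j)"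
proof -
  have "(\<Sum>k\<in>UNIV. (a * (if i = k then 1 else 0) + b * cnj (z$i) * z$k) * (c * (if k = j then 1 else 0) + d * cnj (z$k) * z$j))
     = (a * c) * (if i = j then 1 else 0) + (a * d + b * c + b * d * (\<Sum>k\<in>UNIV. z$k * cnj (z$k))) * cnj (z$i) * z$j" for i j
  proof -
    have "(\<Sum>k\<in>UNIV. (a * (if i = k then 1 else 0) + b * cnj (z$i) * z$k) * (c * (if k = j then 1 else 0) + d * cnj (z$k) * z$j))
      = (\<Sum>k\<in>UNIV. (if k = i then a * c * (if k = j then 1 else 0) else 0)
                  + (if k = i then a * d * cnj (z$k) * z$j else 0)
                  + (if k = j then b * c * cnj (z$i) * z$k else 0)
                  + b * d * cnj (z$i) * z$j * (z$k * cnj (z$k)))"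
      by (rule sum.cong) (auto simp: algebra_simps)
    also have "\<dots> = (\<Sum>k\<in>UNIV. (if k = i then a * c * (if k = j then 1 else 0) else 0))
      + (\<Sum>k\<in>UNIV. (if k = i then a * d * cnj (z$k) * z$j else 0))
      + (\<Sum>k\<in>UNIV. (if k = j then b * c * cnj (z$i) * z$k else 0))
      + (\<Sum>k\<in>UNIV. b * d * cnj (z$i) * z$j * (z$k * cnj (z$k)))"
      by (simp add: sum.distrib)
    also have "\<dots> = (a * c) * (if i = j then 1 else 0) + a * d * cnj (z$i) * z$j + b * c * cnj (z$i) * z$j
       + b * d * cnj (z$i) * z$j * (\<Sum>k\<in>UNIV. z$k * cnj (z$k))"
      by (simp add: sum.delta sum_distrib_left[symmetric])
    also have "\<dots> = (a * c) * (if i = j then 1 else 0) + (a * d + b * c + b * d * (\<Sum>k\<in>UNIV. z$k * cnj (z$k))) * cnj (z$i) * z$j"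
      by (simp add: algebra_simps)
    finally show ?thesis .
  qed
  then show ?thesis by (simp add: matrix_matrix_mult_def vec_eq_iff)
qed

lemma trace_rank1:
  fixes z :: "complex^'n::finite" and H :: "complex^'n^'n"
  shows "trace ((\<chi> i j. p * (if i = j then 1 else 0) + q * cnj (z$i) * z$j) ** H)
       = p * (\<Sum>i\<in>UNIV. H$i$i) + q * (\<Sum>i\<in>UNIV. \<Sum>k\<in>UNIV. cnj (z$i) * z$k * H$k$i)"
proof -
  have "trace ((\<chi> i j. p * (if i = j then 1 else 0) + q * cnj (z$i) * z$j) ** H)
     = (\<Sum>i\<in>UNIV. \<Sum>k\<in>UNIV. (if k = i then p * H$k$i else 0) + q * (cnj (z$i) * z$k * H$k$i))"
    unfolding trace_def matrix_matrix_mult_def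
    by (simp, intro sum.cong refl) (auto simp: algebra_simps)
  also have "\<dots> = p * (\<Sum>i\<in>UNIV. H$i$i) + q * (\<Sum>i\<in>UNIV. \<Sum>k\<in>UNIV. cnj (z$i) * z$k * H$k$i)"
    by (simp add: sum.distrib sum.delta sum_distrib_left)
  finally show ?thesis .
qed

lemma sum_zcz: "(\<Sum>k\<in>UNIV. (z::complex^'n::finite)$k * cnj (z$k)) = complex_of_real (z \<bullet> z)"
  by (simp add: inner_vec_def complex_mult_cnj inner_complex_def power2_eq_square)

lemma card_ge1: "CARD('n::finite) \<ge> 1"
  by (simp add: Suc_leI)

lemma Phi0_eq: "(Phi0 :: complex^'n::finite \<Rightarrow> real) = (\<lambda>y. P CARD('n) (y \<bullet> y))"
  by (simp add: fun_eq_iff Phi0_def P_def Pf_def[abs_def] power2_norm_eq_inner)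

lemma gmat_eq:
  fixes z :: "complex^'n::finite"
  assumes z: "z \<noteq> 0"
  shows "gmat z = (\<chi> i j. complex_of_real (Pf CARD('n) (z \<bullet> z)) * (if i = j then 1 else 0)
             + complex_of_real (Pf1 CARD('n) (z \<bullet> z)) * cnj (z $ i) * z $ j)"
  unfolding gmat_def Phi0_eq
  by (rule radial_hessC[OF P_deriv[OF card_ge1] Pf_deriv[OF card_ge1] z])


lemma pos_facts:
  fixes z :: "complex^'n::finite"
  assumes z: "z \<noteq> 0"
  shows "z \<bullet> z > 0" "phi CARD('n) (ln (z \<bullet> z)) > 0" "phi1 CARD('n) (ln (z \<bullet> z)) > 0"
  using z phi_prop[OF card_ge1] phi1_pos[OF card_ge1] by auto

lemma lap_formula:
  fixes z :: "complex^'n::finite"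
  assumes z: "z \<noteq> 0" and B: "bilinear (D2 f z)"
  shows "lap f z = (z \<bullet> z / phi CARD('n) (ln (z \<bullet> z))) *
            (\<Sum>i\<in>UNIV. D2 f z (axis i 1) (axis i 1) + D2 f z (axis i \<i>) (axis i \<i>))
        + ((phi CARD('n) (ln (z \<bullet> z)) - phi1 CARD('n) (ln (z \<bullet> z))) / (phi CARD('n) (ln (z \<bullet> z)) * phi1 CARD('n) (ln (z \<bullet> z))))
            * (D2 f z z z + D2 f z (iv z) (iv z))"
proof -
  define n where "n = CARD('n)"
  define s where "s = z \<bullet> z"
  define \<phi> where "\<phi> = phi n (ln s)"
  define \<phi>1 where "\<phi>1 = phi1 n (ln s)"
  have s: "s > 0" and ph: "\<phi> > 0" and ph1: "\<phi>1 > 0"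
    using pos_facts[OF z] by (auto simp: s_def \<phi>_def \<phi>1_def n_def)
  define a where "a = Pf n s"
  define b where "b = Pf1 n s"
  define p where "p = s / \<phi>"
  define q where "q = (\<phi> - \<phi>1) / (\<phi> * \<phi>1)"
  have a: "a = \<phi> / s" by (simp add: a_def Pf_def \<phi>_def)
  have b: "b = (\<phi>1 - \<phi>) / s^2" by (simp add: b_def Pf1_def \<phi>_def \<phi>1_def)
  have ap: "a * p = 1" using s ph by (simp add: a p_def)
  have e0: "a * q + b * p + b * q * s = 0" using s ph ph1
    by (simp add: a b p_def q_def field_simps power2_eq_square)
  have G: "gmat z = (\<chi> i j. complex_of_real a * (if i = j then 1 else 0) + complex_of_real b * cnj (z $ i) * z $ j)"
    using gmat_eq[OF z] by (simp add: a_def b_def n_def s_def)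
  define M where "M = (\<chi> i j. complex_of_real p * (if i = j then 1 else 0) + complex_of_real q * cnj (z $ i) * z $ j)"
  have m1: "mat 1 = (\<chi> i j. (1::complex) * (if i = j then 1 else 0) + 0 * cnj (z $ i) * z $ j)"
    by (simp add: mat_def)
  have c1: "complex_of_real a * complex_of_real p = 1" using ap by (metis of_real_1 of_real_mult)
  have c2: "complex_of_real a * complex_of_real q + complex_of_real b * complex_of_real p + complex_of_real b * complex_of_real q * (\<Sum>k\<in>UNIV. z$k * cnj (z$k)) = 0"
    using e0 unfolding sum_zcz s_def[symmetric] by (metis of_real_0 of_real_add of_real_mult)
  have c3: "complex_of_real p * complex_of_real a = 1" using c1 by (simp add: mult.commute)
  have c4: "complex_of_real p * complex_of_real b + complex_of_real q * complex_of_real a + complex_of_real q * complex_of_real b * (\<Sum>k\<in>UNIV. z$k * cnj (z$k)) = 0"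
    using c2 by (simp add: algebra_simps)
  have inv: "matrix_inv (gmat z) = M"
    by (rule matrix_inv_eq) (simp_all only: G M_def rank1_mul c1 c2 c3 c4 m1)
  have "lap f z = 4 * Re (complex_of_real p * (\<Sum>i\<in>UNIV. hessC f z $ i $ i)
        + complex_of_real q * (\<Sum>i\<in>UNIV. \<Sum>k\<in>UNIV. cnj (z$i) * z$k * hessC f z $ k $ i))"
    unfolding lap_def inv M_def trace_rank1 ..
  also have "\<dots> = 4 * (p * Re (\<Sum>i\<in>UNIV. hessC f z $ i $ i) + q * Re (\<Sum>i\<in>UNIV. \<Sum>k\<in>UNIV. cnj (z$i) * z$k * hessC f z $ k $ i))"
    by simp
  also have "\<dots> = p * (\<Sum>i\<in>UNIV. D2 f z (axis i 1) (axis i 1) + D2 f z (axis i \<i>) (axis i \<i>))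
        + q * (D2 f z z z + D2 f z (iv z) (iv z))"
    unfolding ReTr ReQ[OF B] by simp
  finally show ?thesis by (simp add: p_def q_def s_def \<phi>_def \<phi>1_def n_def)
qed



lemma second_order:
  fixes g :: "'a::real_normed_vector \<Rightarrow> real"
  assumes U: "open U" "z \<in> U" and mx: "\<forall>y\<in>U. g y \<le> g z"
    and dg: "\<And>y. y \<in> U \<Longrightarrow> (g has_derivative Gd y) (at y)"
    and dG: "((\<lambda>y. Gd y w) has_derivative Gs) (at z)"
  shows "Gs w \<le> 0"
proof (rule ccontr)
  assume "\<not> Gs w \<le> 0"
  then have pos: "Gs w > 0" by simp
  obtain e where e: "e > 0" "ball z e \<subseteq> U" using U open_contains_ball by blast
  define d where "d = e / (norm w + 1)"
  have nw: "norm w + 1 > 0" by (simp add: add_nonneg_pos)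
  have d: "d > 0" using e nw by (simp add: d_def)
  have inU: "z + t *\<^sub>R w \<in> U" if "\<bar>t\<bar> < d" for t
  proof -
    have "norm (t *\<^sub>R w) = \<bar>t\<bar> * norm w" by simp
    also have "\<dots> \<le> \<bar>t\<bar> * (norm w + 1)" by (simp add: mult_left_mono)
    also have "\<dots> < d * (norm w + 1)" using that nw by (simp add: mult_strict_right_mono)
    also have "\<dots> = e" using nw by (simp add: d_def)
    finally show ?thesis using e by (auto simp: dist_norm)
  qed
  have lin: "linear (Gd y)" if "y \<in> U" for y using dg[OF that] by (rule has_derivative_linear)
  have dline: "((\<lambda>t. z + t *\<^sub>R w) has_derivative (\<lambda>s. s *\<^sub>R w)) (at t)" for t
    by (auto intro!: derivative_eq_intros)
  have dh: "((\<lambda>t. g (z + t *\<^sub>R w)) has_real_derivative Gd (z + t *\<^sub>R w) w) (at t)" if "\<bar>t\<bar> < d" for t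
  proof (rule has_derivative_imp_has_field_derivative)
    show "((\<lambda>t. g (z + t *\<^sub>R w)) has_derivative (\<lambda>s. Gd (z + t *\<^sub>R w) (s *\<^sub>R w))) (at t)"
      by (rule has_derivative_compose[OF dline dg[OF inU[OF that]]])
    show "s * Gd (z + t *\<^sub>R w) w = Gd (z + t *\<^sub>R w) (s *\<^sub>R w)" for s
      using linear_scale[OF lin[OF inU[OF that]]] by simp
  qed
  have dk: "((\<lambda>t. Gd (z + t *\<^sub>R w) w) has_real_derivative Gs w) (at 0)"
  proof (rule has_derivative_imp_has_field_derivative)
    show "((\<lambda>t. Gd (z + t *\<^sub>R w) w) has_derivative (\<lambda>s. Gs (s *\<^sub>R w))) (at 0)"
      using has_derivative_compose[OF dline[of 0], of "\<lambda>y. Gd y w" Gs] dG by simp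
    show "s * Gs w = Gs (s *\<^sub>R w)" for s
      using linear_scale[OF has_derivative_linear[OF dG]] by simp
  qed
  have Gz: "Gd z = (\<lambda>v. 0)"
    by (rule differential_zero_maxmin[OF U(2) U(1) dg[OF U(2)]]) (use mx in auto)
  obtain d1 where d1: "d1 > 0" "\<forall>h>0. h < d1 \<longrightarrow> Gd (z + 0 *\<^sub>R w) w < Gd (z + (0 + h) *\<^sub>R w) w"
    using DERIV_pos_inc_right[OF dk pos] by blast
  define h0 where "h0 = min d1 d / 2"
  have h0: "0 < h0" "h0 < d1" "h0 < d" using d d1 by (auto simp: h0_def)
  have kpos: "Gd (z + t *\<^sub>R w) w > 0" if "0 < t" "t \<le> h0" for t
    using d1(2)[rule_format, of t] that h0 Gz by simp
  have cont: "continuous_on {0..h0} (\<lambda>t. g (z + t *\<^sub>R w))"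
    using h0 by (intro continuous_at_imp_continuous_on ballI DERIV_isCont[OF dh]) auto
  have diffx: "(\<lambda>t. g (z + t *\<^sub>R w)) differentiable at x" if "0 < x" "x < h0" for x
    using dh[of x] that h0 by (auto simp: real_differentiable_def)
  obtain l \<xi> where \<xi>: "0 < \<xi>" "\<xi> < h0" "DERIV (\<lambda>t. g (z + t *\<^sub>R w)) \<xi> :> l"
    "g (z + h0 *\<^sub>R w) - g (z + 0 *\<^sub>R w) = (h0 - 0) * l"
    using MVT[OF h0(1) cont diffx] by blast
  have "l = Gd (z + \<xi> *\<^sub>R w) w" using DERIV_unique[OF \<xi>(3) dh] \<xi> h0 by simp
  then have "l > 0" using kpos \<xi> by simp
  then have "h0 * l > 0" using h0 by simp
  then have "g (z + h0 *\<^sub>R w) > g z" using \<xi>(4) by simp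
  moreover have "g (z + h0 *\<^sub>R w) \<le> g z" using mx inU h0 by simp
  ultimately show False by simp
qed


lemma D2_bilinear:
  fixes u :: "complex^'n::finite \<Rightarrow> real"
  assumes U: "open U" "z \<in> U" and du: "\<forall>x\<in>U. u differentiable (at x)"
    and d2: "\<forall>v. \<forall>x\<in>U. (\<lambda>y. frechet_derivative u (at y) v) differentiable (at x)"
  shows "bilinear (D2 u z)"
proof -
  define F where "F v = (\<lambda>y. frechet_derivative u (at y) v)" for v
  have hv: "(F v has_derivative frechet_derivative (F v) (at z)) (at z)" for v
    using d2 U by (simp add: frechet_derivative_works F_def)
  have linU: "linear (frechet_derivative u (at y))" if "y \<in> U" for y
    using du that by (meson frechet_derivative_works has_derivative_linear)
  have D2F: "D2 u z v w = frechet_derivative (F v) (at z) w" for v w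
    by (simp add: D2_def F_def)
  have l1: "linear (D2 u z v)" for v
  proof -
    have "D2 u z v = frechet_derivative (F v) (at z)" by (simp add: fun_eq_iff D2F)
    then show ?thesis using has_derivative_linear[OF hv[of v]] by simp
  qed
  have l2: "linear (\<lambda>v. D2 u z v w)" for w
  proof (rule linearI)
    fix v1 v2
    have "((\<lambda>y. F v1 y + F v2 y) has_derivative (\<lambda>w. frechet_derivative (F v1) (at z) w + frechet_derivative (F v2) (at z) w)) (at z)"
      by (rule has_derivative_add[OF hv hv])
    then have "(F (v1 + v2) has_derivative (\<lambda>w. frechet_derivative (F v1) (at z) w + frechet_derivative (F v2) (at z) w)) (at z)"
    proof (rule has_derivative_transform_within_open[OF _ U(1) U(2)])
      fix y assume "y \<in> U"
      then show "F v1 y + F v2 y = F (v1 + v2) y"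
        unfolding F_def using linear_add[OF linU] by simp
    qed
    from frechet_derivative_at[OF this]
    show "D2 u z (v1 + v2) w = D2 u z v1 w + D2 u z v2 w" unfolding D2F by (metis)
  next
    fix r v
    have "((\<lambda>y. r * F v y) has_derivative (\<lambda>w. r * frechet_derivative (F v) (at z) w)) (at z)"
      by (rule has_derivative_mult_right[OF hv])
    then have "(F (r *\<^sub>R v) has_derivative (\<lambda>w. r * frechet_derivative (F v) (at z) w)) (at z)"
    proof (rule has_derivative_transform_within_open[OF _ U(1) U(2)])
      fix y assume "y \<in> U"
      then show "r * F v y = F (r *\<^sub>R v) y"
        unfolding F_def using linear_scale[OF linU] by simp
    qed
    from frechet_derivative_at[OF this]
    show "D2 u z (r *\<^sub>R v) w = r *\<^sub>R D2 u z v w" unfolding D2F by (metis real_scaleR_def)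
  qed
  show ?thesis unfolding bilinear_def using l1 l2 by blast
qed


definition LR :: "nat \<Rightarrow> real \<Rightarrow> real \<Rightarrow> real \<Rightarrow> real" where
  "LR n s a b = (s / phi n (ln s)) * (4 * b * s + 4 * real n * a)
     + ((phi n (ln s) - phi1 n (ln s)) / (phi n (ln s) * phi1 n (ln s))) * (4 * b * s\<^sup>2 + 4 * a * s)
     + 4 * a * s"

lemma inner_iv: "(z::complex^'n::finite) \<bullet> iv z = 0" "iv z \<bullet> iv z = z \<bullet> z"
  by (simp_all add: inner_vec_def iv_def inner_complex_def algebra_simps)

lemma sum_axis_sq: "(\<Sum>i\<in>UNIV. ((z::complex^'n::finite) \<bullet> axis i 1)\<^sup>2 + (z \<bullet> axis i \<i>)\<^sup>2) = z \<bullet> z"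
proof -
  have "z \<bullet> axis i 1 = Re (z$i)" "z \<bullet> axis i \<i> = Im (z$i)" for i
    by (simp_all add: inner_axis inner_complex_def)
  then show ?thesis by (simp add: inner_vec_def inner_complex_def power2_eq_square)
qed

lemma compare:
  fixes u :: "complex^'n::finite \<Rightarrow> real" and H H1 H2 :: "real \<Rightarrow> real"
  assumes U: "open U" "z \<in> U" "0 \<notin> U"
    and du: "\<forall>x\<in>U. u differentiable (at x)"
    and d2: "\<forall>v. \<forall>x\<in>U. (\<lambda>y. frechet_derivative u (at y) v) differentiable (at x)"
    and dH: "\<And>s. s > 0 \<Longrightarrow> (H has_real_derivative H1 s) (at s)"
    and dH1: "\<And>s. s > 0 \<Longrightarrow> (H1 has_real_derivative H2 s) (at s)"
    and mx: "\<forall>y\<in>U. u y - H (y \<bullet> y) \<le> u z - H (z \<bullet> z)"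
  shows "lap u z - Xop u z \<le> LR CARD('n) (z \<bullet> z) (H1 (z \<bullet> z)) (H2 (z \<bullet> z))"
proof -
  define \<psi> where "\<psi> = (\<lambda>y::complex^'n. H (y \<bullet> y))"
  have z: "z \<noteq> 0" using U by auto
  have nz: "y \<noteq> 0" if "y \<in> U" for y using U that by auto
  have dpsi: "(\<psi> has_derivative frechet_derivative \<psi> (at y)) (at y)" if "y \<noteq> 0" for y
    using radial_d1[OF dH that] unfolding \<psi>_def by (meson differentiable_def frechet_derivative_works)
  have dpsi2: "((\<lambda>y. frechet_derivative \<psi> (at y) v) has_derivative (\<lambda>w. D2 \<psi> y v w)) (at y)" if "y \<noteq> 0" for y v
  proof -
    note h = radial_d2[OF dH dH1 that, of v]
    have "(\<lambda>w. D2 \<psi> y v w) = (\<lambda>w. 4 * H2 (y \<bullet> y) * (y \<bullet> v) * (y \<bullet> w) + 2 * H1 (y \<bullet> y) * (v \<bullet> w))"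
      unfolding \<psi>_def using radial_D2[OF dH dH1 that] by simp
    then show ?thesis using h unfolding \<psi>_def by simp
  qed
  have du': "(u has_derivative frechet_derivative u (at y)) (at y)" if "y \<in> U" for y
    using du that by (simp add: frechet_derivative_works)
  have du2: "((\<lambda>y. frechet_derivative u (at y) v) has_derivative (\<lambda>w. D2 u z v w)) (at z)" for v
    using d2 U(2) unfolding D2_def by (simp add: frechet_derivative_works)
  define g where "g y = u y - \<psi> y" for y
  define Gd where "Gd y v = frechet_derivative u (at y) v - frechet_derivative \<psi> (at y) v" for y v
  have dg: "(g has_derivative Gd y) (at y)" if "y \<in> U" for y
    unfolding g_def Gd_def[abs_def] by (rule has_derivative_diff[OF du'[OF that] dpsi[OF nz[OF that]]])
  have mxg: "\<forall>y\<in>U. g y \<le> g z" using mx by (simp add: g_def \<psi>_def)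
  have so: "D2 u z w w - D2 \<psi> z w w \<le> 0" for w
  proof -
    have "((\<lambda>y. Gd y w) has_derivative (\<lambda>v. D2 u z w v - D2 \<psi> z w v)) (at z)"
      unfolding Gd_def by (rule has_derivative_diff[OF du2 dpsi2[OF z]])
    from second_order[OF U(1) U(2) mxg dg this] show ?thesis .
  qed
  have Gz: "Gd z = (\<lambda>v. 0)"
    by (rule differential_zero_maxmin[OF U(2) U(1) dg[OF U(2)]]) (use mxg in auto)
  have fdeq: "frechet_derivative u (at z) z = frechet_derivative \<psi> (at z) z"
    using fun_cong[OF Gz, of z] by (simp add: Gd_def)
  have fdpsi: "frechet_derivative \<psi> (at z) z = 2 * H1 (z \<bullet> z) * (z \<bullet> z)"
    using radial_fd[OF dH z] by (simp add: \<psi>_def)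
  have X: "Xop u z = - 4 * H1 (z \<bullet> z) * (z \<bullet> z)"
    unfolding Xop_def fdeq fdpsi by simp
  have Bu: "bilinear (D2 u z)" by (rule D2_bilinear[OF U(1) U(2) du d2])
  have Bpsi: "bilinear (D2 \<psi> z)"
  proof (rule D2_bilinear[of "-{0}"])
    show "\<forall>x\<in>- {0}. \<psi> differentiable at x" using dpsi by (auto simp: differentiable_def)
    show "\<forall>v. \<forall>x\<in>- {0}. (\<lambda>y. frechet_derivative \<psi> (at y) v) differentiable at x"
      using dpsi2 by (auto simp: differentiable_def)
  qed (use z in auto)
  define n where "n = CARD('n)"
  define s where "s = z \<bullet> z"
  define p where "p = s / phi n (ln s)"
  define q where "q = (phi n (ln s) - phi1 n (ln s)) / (phi n (ln s) * phi1 n (ln s))"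
  have s: "s > 0" and ph: "phi n (ln s) > 0" and ph1: "phi1 n (ln s) > 0"
    using pos_facts[OF z] by (auto simp: s_def n_def)
  have p: "p \<ge> 0" using s ph by (simp add: p_def)
  have q: "q \<ge> 0" using ph ph1 phi1_le_phi[OF card_ge1[where 'n='n], of "ln s"] by (simp add: q_def n_def)
  have lu: "lap u z = p * (\<Sum>i\<in>UNIV. D2 u z (axis i 1) (axis i 1) + D2 u z (axis i \<i>) (axis i \<i>)) + q * (D2 u z z z + D2 u z (iv z) (iv z))"
    using lap_formula[OF z Bu] by (simp add: p_def q_def s_def n_def)
  have lp: "lap \<psi> z = p * (\<Sum>i\<in>UNIV. D2 \<psi> z (axis i 1) (axis i 1) + D2 \<psi> z (axis i \<i>) (axis i \<i>)) + q * (D2 \<psi> z z z + D2 \<psi> z (iv z) (iv z))"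
    using lap_formula[OF z Bpsi] by (simp add: p_def q_def s_def n_def)
  have t1: "(\<Sum>i\<in>UNIV. D2 u z (axis i 1) (axis i 1) + D2 u z (axis i \<i>) (axis i \<i>)) \<le> (\<Sum>i\<in>UNIV. D2 \<psi> z (axis i 1) (axis i 1) + D2 \<psi> z (axis i \<i>) (axis i \<i>))"
    by (rule sum_mono) (use so in \<open>smt (verit)\<close>)
  have t2: "D2 u z z z + D2 u z (iv z) (iv z) \<le> D2 \<psi> z z z + D2 \<psi> z (iv z) (iv z)"
    using so[of z] so[of "iv z"] by simp
  have "lap u z \<le> lap \<psi> z"
    unfolding lu lp by (intro add_mono mult_left_mono p q t1 t2)
  also have "lap \<psi> z = p * (4 * H2 s * s + 4 * real n * H1 s) + q * (4 * H2 s * s\<^sup>2 + 4 * H1 s * s)"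
  proof -
    have D: "D2 \<psi> z v w = 4 * H2 s * (z \<bullet> v) * (z \<bullet> w) + 2 * H1 s * (v \<bullet> w)" for v w
      unfolding \<psi>_def s_def by (rule radial_D2[OF dH dH1 z])
    have S: "(\<Sum>i\<in>UNIV. D2 \<psi> z (axis i 1) (axis i 1) + D2 \<psi> z (axis i \<i>) (axis i \<i>))
          = 4 * H2 s * (\<Sum>i\<in>UNIV. (z \<bullet> axis i 1)\<^sup>2 + (z \<bullet> axis i \<i>)\<^sup>2) + 4 * real n * H1 s"
      by (simp add: D inner_axis_axis sum.distrib sum_distrib_left power2_eq_square algebra_simps n_def)
    have Q: "D2 \<psi> z z z + D2 \<psi> z (iv z) (iv z) = 4 * H2 s * s\<^sup>2 + 4 * H1 s * s"
      by (simp add: D inner_iv s_def power2_eq_square)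
    show ?thesis unfolding lp S Q sum_axis_sq s_def[symmetric] ..
  qed
  finally have "lap u z \<le> p * (4 * H2 s * s + 4 * real n * H1 s) + q * (4 * H2 s * s\<^sup>2 + 4 * H1 s * s)" .
  then show ?thesis unfolding X LR_def by (simp add: p_def q_def s_def n_def algebra_simps)
qed



lemma annulus_max:
  fixes u :: "complex^'n::finite \<Rightarrow> real" and H H1 H2 :: "real \<Rightarrow> real"
  assumes U: "open U" "{y. r1 \<le> norm y \<and> norm y \<le> r2} \<subseteq> U" and r1: "0 < r1"
    and du: "\<forall>x\<in>U. u differentiable (at x)"
    and d2: "\<forall>v. \<forall>x\<in>U. (\<lambda>y. frechet_derivative u (at y) v) differentiable (at x)"
    and dH: "\<And>s. s > 0 \<Longrightarrow> (H has_real_derivative H1 s) (at s)"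
    and dH1: "\<And>s. s > 0 \<Longrightarrow> (H1 has_real_derivative H2 s) (at s)"
    and bd: "\<And>y. r1 \<le> norm y \<Longrightarrow> norm y \<le> r2 \<Longrightarrow> norm y = r1 \<or> norm y = r2 \<Longrightarrow> u y - H (y \<bullet> y) \<le> 0"
    and p: "r1 \<le> norm p" "norm p \<le> r2" "u p - H (p \<bullet> p) > 0"
  shows "\<exists>q. r1 < norm q \<and> norm q < r2 \<and> lap u q - Xop u q \<le> LR CARD('n) (q \<bullet> q) (H1 (q \<bullet> q)) (H2 (q \<bullet> q))"
proof -
  define K where "K = {y::complex^'n. r1 \<le> norm y \<and> norm y \<le> r2}"
  define v where "v y = u y - H (y \<bullet> y)" for y
  have KE: "K = cball 0 r2 \<inter> - ball 0 r1" by (auto simp: K_def)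
  have cK: "compact K" unfolding KE by (intro compact_Int_closed compact_cball) auto
  have pK: "p \<in> K" using p by (simp add: K_def)
  have cv: "continuous_on K v"
  proof (intro continuous_at_imp_continuous_on ballI)
    fix y assume y: "y \<in> K"
    then have yU: "y \<in> U" and y0: "y \<noteq> 0" using U r1 by (auto simp: K_def)
    have c1: "isCont u y" using du yU differentiable_imp_continuous_within by blast
    have c2: "isCont (\<lambda>y. H (y \<bullet> y)) y"
      using radial_d1[OF dH y0] has_derivative_continuous by blast
    show "isCont v y" unfolding v_def[abs_def] using c1 c2 by (intro continuous_intros)
  qed
  obtain q where q: "q \<in> K" "\<forall>y\<in>K. v y \<le> v q"
    using continuous_attains_sup[OF cK _ cv] pK by blast
  have vq: "v q > 0" using q(2) pK p(3) by (force simp: v_def)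
  have qi: "r1 < norm q \<and> norm q < r2"
  proof -
    have "r1 \<le> norm q" "norm q \<le> r2" using q(1) by (auto simp: K_def)
    moreover have "\<not> (norm q = r1 \<or> norm q = r2)" using bd[of q] vq calculation by (auto simp: v_def)
    ultimately show ?thesis by linarith
  qed
  define V where "V = {y::complex^'n. r1 < norm y \<and> norm y < r2}"
  have VE: "V = ball 0 r2 \<inter> - cball 0 r1" by (auto simp: V_def)
  have oV: "open V" unfolding VE by (intro open_Int) auto
  have VU: "V \<subseteq> U" using U(2) by (auto simp: V_def)
  have "lap u q - Xop u q \<le> LR CARD('n) (q \<bullet> q) (H1 (q \<bullet> q)) (H2 (q \<bullet> q))"
  proof (rule compare[OF oV _ _ _ _ dH dH1])
    show "q \<in> V" using qi by (simp add: V_def)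
    show "0 \<notin> V" using r1 by (simp add: V_def)
    show "\<forall>x\<in>V. u differentiable at x" using du VU by blast
    show "\<forall>v. \<forall>x\<in>V. (\<lambda>y. frechet_derivative u (at y) v) differentiable at x" using d2 VU by blast
    show "\<forall>y\<in>V. u y - H (y \<bullet> y) \<le> u q - H (q \<bullet> q)"
      using q(2) by (auto simp: V_def K_def v_def)
  qed
  then show ?thesis using qi by blast
qed


lemma lnchain1:
  assumes dh: "\<And>t. (h has_real_derivative h1 t) (at t)" and s: "s > 0"
  shows "((\<lambda>s. h (ln s)) has_real_derivative h1 (ln s) / s) (at s)"
  using DERIV_chain2[OF dh DERIV_ln_divide[OF s]] by simp

lemma lnchain2:
  assumes dh: "\<And>t. (h1 has_real_derivative h2 t) (at t)" and s: "s > 0"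
  shows "((\<lambda>s. h1 (ln s) / s) has_real_derivative (h2 (ln s) - h1 (ln s)) / s\<^sup>2) (at s)"
proof -
  have "((\<lambda>s. h1 (ln s) / s) has_real_derivative ((h2 (ln s) * (1 / s)) * s - h1 (ln s) * 1) / (s * s)) (at s)"
    by (rule DERIV_divide[OF DERIV_chain2[OF dh DERIV_ln_divide[OF s]] DERIV_ident]) (use s in simp)
  then show ?thesis using s by (simp add: field_simps power2_eq_square)
qed

lemma LR_t:
  assumes n: "n \<ge> 1" and s: "s > 0"
  shows "LR n s (a1 / s) ((a2 - a1) / s\<^sup>2) = 4 * a2 / phi1 n (ln s) + 4 * (real n - 1) * a1 / phi n (ln s) + 4 * a1"
proof -
  have ph: "phi n (ln s) > 0" using phi_prop[OF n] by simp
  have ph1: "phi1 n (ln s) > 0" using phi1_pos[OF n] by simp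
  show ?thesis unfolding LR_def using s ph ph1
    by (simp add: field_simps power2_eq_square)
qed

definition ex :: "nat \<Rightarrow> real \<Rightarrow> real \<Rightarrow> real" where "ex n k t = exp (- k * phi n t)"
definition ex1 :: "nat \<Rightarrow> real \<Rightarrow> real \<Rightarrow> real" where "ex1 n k t = - k * phi1 n t * ex n k t"
definition ex2 :: "nat \<Rightarrow> real \<Rightarrow> real \<Rightarrow> real" where "ex2 n k t = - k * (phi2 n t - k * (phi1 n t)\<^sup>2) * ex n k t"

lemma ex_deriv: "n \<ge> 1 \<Longrightarrow> (ex n k has_real_derivative ex1 n k t) (at t)"
  unfolding ex_def[abs_def] ex1_def ex_def
  by (auto intro!: derivative_eq_intros phi_deriv)

lemma ex1_deriv: "n \<ge> 1 \<Longrightarrow> (ex1 n k has_real_derivative ex2 n k t) (at t)"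
  unfolding ex1_def[abs_def] ex2_def ex_def
  by (auto intro!: derivative_eq_intros phi_deriv phi1_deriv simp: power2_eq_square algebra_simps)

lemma Q_ex:
  assumes n: "n \<ge> 1"
  shows "4 * ex2 n k t / phi1 n t + 4 * (real n - 1) * ex1 n k t / phi n t + 4 * ex1 n k t
       = - 4 * k * ex n k t * (real n - k * phi1 n t)"
proof -
  have ph: "phi n t > 0" using phi_prop[OF n] by simp
  have ph1: "phi1 n t > 0" using phi1_pos[OF n] by simp
  show ?thesis unfolding ex2_def ex1_def phi2_def using ph ph1
    by (simp add: field_simps power2_eq_square)
qed



lemma barrier12:
  assumes n: "n \<ge> 1" and d: "0 < \<delta>" "\<delta> < 1" and s: "s > 0" and M: "M \<ge> 0" and e: "\<epsilon> > 0"
    and b: "exp (\<delta> * phi n (ln s)) * \<bar>L\<bar> \<le> b"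
    and L: "L \<le> LR n s ((M * ex1 n \<delta> (ln s) - \<epsilon>) / s) ((M * ex2 n \<delta> (ln s) - (M * ex1 n \<delta> (ln s) - \<epsilon>)) / s\<^sup>2)"
    and Mb: "M \<ge> b / (4 * \<delta> * (1 - \<delta>) * real n)"
  shows False
proof -
  define x where "x = ln s"
  define E where "E = ex n \<delta> x"
  have ph: "phi n x > 0" using phi_prop[OF n] by simp
  have ph1: "phi1 n x > 0" "phi1 n x \<le> real n" using phi1_pos[OF n] phi1_le_n[OF n] by auto
  have Epos: "E > 0" by (simp add: E_def ex_def)
  have wE: "exp (\<delta> * phi n x) * E = 1" by (simp add: E_def ex_def exp_add[symmetric])
  have "LR n s ((M * ex1 n \<delta> x - \<epsilon>) / s) ((M * ex2 n \<delta> x - (M * ex1 n \<delta> x - \<epsilon>)) / s\<^sup>2)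
      = M * (4 * ex2 n \<delta> x / phi1 n x + 4 * (real n - 1) * ex1 n \<delta> x / phi n x + 4 * ex1 n \<delta> x)
        - \<epsilon> * (4 * (real n - 1) / phi n x + 4)"
    unfolding LR_t[OF n s] x_def[symmetric] using ph ph1 by (simp add: field_simps)
  also have "\<dots> = - 4 * \<delta> * M * E * (real n - \<delta> * phi1 n x) - \<epsilon> * (4 * (real n - 1) / phi n x + 4)"
    unfolding Q_ex[OF n] E_def by simp
  also have "\<dots> < - 4 * \<delta> * M * E * (real n - \<delta> * phi1 n x)"
  proof -
    have "4 * (real n - 1) / phi n x + 4 > 0" using n ph by (simp add: add_nonneg_pos)
    then show ?thesis using e by simp
  qed
  also have "\<dots> \<le> - 4 * \<delta> * M * E * ((1 - \<delta>) * real n)"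
  proof -
    have "(1 - \<delta>) * real n \<le> real n - \<delta> * phi1 n x" using ph1 d by (simp add: algebra_simps mult_left_mono)
    moreover have "4 * \<delta> * M * E \<ge> 0" using d M Epos by simp
    ultimately show ?thesis by (simp add: mult_left_mono)
  qed
  finally have L2: "L < - 4 * \<delta> * (1 - \<delta>) * real n * M * E" using L unfolding x_def by (simp add: algebra_simps)
  have "- b * E \<le> L"
  proof -
    have "\<bar>L\<bar> \<le> b * E"
    proof -
      have "\<bar>L\<bar> = exp (\<delta> * phi n x) * \<bar>L\<bar> * E" using wE by (simp add: algebra_simps)
      also have "\<dots> \<le> b * E" using b Epos unfolding x_def by (simp add: mult_right_mono)
      finally show ?thesis .
    qed
    then show ?thesis by linarith
  qed
  then have "b * E > 4 * \<delta> * (1 - \<delta>) * real n * M * E" using L2 by linarith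
  then have bM: "b > 4 * \<delta> * (1 - \<delta>) * real n * M" using Epos by (simp add: mult.commute)
  have pos: "4 * \<delta> * (1 - \<delta>) * real n > 0" using d n by simp
  from Mb pos have "b \<le> M * (4 * \<delta> * (1 - \<delta>) * real n)" by (simp add: divide_le_eq)
  then show False using bM by (simp add: algebra_simps)
qed

lemma barrier3:
  assumes n: "n \<ge> 1" and d: "0 < \<delta>" "\<delta> < 1" and s: "s > 0" and M: "M \<ge> 0" and e: "\<epsilon> > 0"
    and b: "exp (\<delta> * phi n (ln s)) * \<bar>L\<bar> \<le> b"
    and L: "L \<le> LR n s ((M * ex1 n \<delta> (ln s) + \<epsilon> * ex1 n (\<delta>/2) (ln s)) / s)
                 ((M * ex2 n \<delta> (ln s) + \<epsilon> * ex2 n (\<delta>/2) (ln s) - (M * ex1 n \<delta> (ln s) + \<epsilon> * ex1 n (\<delta>/2) (ln s))) / s\<^sup>2)"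
    and Mb: "M \<ge> b / (4 * \<delta> * (1 - \<delta>) * real n)"
  shows False
proof -
  define x where "x = ln s"
  define E where "E = ex n \<delta> x"
  define E2 where "E2 = ex n (\<delta>/2) x"
  have ph: "phi n x > 0" using phi_prop[OF n] by simp
  have ph1: "phi1 n x > 0" "phi1 n x \<le> real n" using phi1_pos[OF n] phi1_le_n[OF n] by auto
  have Epos: "E > 0" "E2 > 0" by (simp_all add: E_def E2_def ex_def)
  have wE: "exp (\<delta> * phi n x) * E = 1" by (simp add: E_def ex_def exp_add[symmetric])
  have "LR n s ((M * ex1 n \<delta> x + \<epsilon> * ex1 n (\<delta>/2) x) / s) ((M * ex2 n \<delta> x + \<epsilon> * ex2 n (\<delta>/2) x - (M * ex1 n \<delta> x + \<epsilon> * ex1 n (\<delta>/2) x)) / s\<^sup>2)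
      = M * (4 * ex2 n \<delta> x / phi1 n x + 4 * (real n - 1) * ex1 n \<delta> x / phi n x + 4 * ex1 n \<delta> x)
        + \<epsilon> * (4 * ex2 n (\<delta>/2) x / phi1 n x + 4 * (real n - 1) * ex1 n (\<delta>/2) x / phi n x + 4 * ex1 n (\<delta>/2) x)"
    unfolding LR_t[OF n s] x_def[symmetric] using ph ph1 by (simp add: field_simps)
  also have "\<dots> = - 4 * \<delta> * M * E * (real n - \<delta> * phi1 n x) + \<epsilon> * (- 4 * (\<delta>/2) * E2 * (real n - (\<delta>/2) * phi1 n x))"
    unfolding Q_ex[OF n] E_def E2_def by simp
  also have "\<dots> < - 4 * \<delta> * M * E * (real n - \<delta> * phi1 n x)"
  proof -
    have "(\<delta>/2) * phi1 n x < real n" using ph1 d n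
      by (smt (verit, ccfv_SIG) divide_less_eq_1_pos mult_le_cancel_right1 of_nat_0_less_iff order_less_le_trans less_le_trans mult_less_cancel_right2 zero_less_one)
    then have "4 * (\<delta>/2) * E2 * (real n - (\<delta>/2) * phi1 n x) > 0" using d Epos by simp
    then show ?thesis using e by (simp add: mult_pos_pos)
  qed
  also have "\<dots> \<le> - 4 * \<delta> * M * E * ((1 - \<delta>) * real n)"
  proof -
    have "(1 - \<delta>) * real n \<le> real n - \<delta> * phi1 n x" using ph1 d by (simp add: algebra_simps mult_left_mono)
    moreover have "4 * \<delta> * M * E \<ge> 0" using d M Epos by simp
    ultimately show ?thesis by (simp add: mult_left_mono)
  qed
  finally have L2: "L < - 4 * \<delta> * (1 - \<delta>) * real n * M * E" using L unfolding x_def by (simp add: algebra_simps)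
  have "- b * E \<le> L"
  proof -
    have "\<bar>L\<bar> \<le> b * E"
    proof -
      have "\<bar>L\<bar> = exp (\<delta> * phi n x) * \<bar>L\<bar> * E" using wE by (simp add: algebra_simps)
      also have "\<dots> \<le> b * E" using b Epos unfolding x_def by (simp add: mult_right_mono)
      finally show ?thesis .
    qed
    then show ?thesis by linarith
  qed
  then have "b * E > 4 * \<delta> * (1 - \<delta>) * real n * M * E" using L2 by linarith
  then have bM: "b > 4 * \<delta> * (1 - \<delta>) * real n * M" using Epos by (simp add: mult.commute)
  have pos: "4 * \<delta> * (1 - \<delta>) * real n > 0" using d n by simp
  from Mb pos have "b \<le> M * (4 * \<delta> * (1 - \<delta>) * real n)" by (simp add: divide_le_eq)
  then show False using bM by (simp add: algebra_simps)
qed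



lemma neg_C2:
  fixes u :: "complex^'n::finite \<Rightarrow> real"
  assumes U: "open U" and du: "\<forall>x\<in>U. u differentiable (at x)"
    and d2: "\<forall>v. \<forall>x\<in>U. (\<lambda>y. frechet_derivative u (at y) v) differentiable (at x)"
  shows "\<forall>x\<in>U. (\<lambda>y. - u y) differentiable (at x)"
    and "\<forall>v. \<forall>x\<in>U. (\<lambda>y. frechet_derivative (\<lambda>y. - u y) (at y) v) differentiable (at x)"
    and "z \<in> U \<Longrightarrow> lap (\<lambda>y. - u y) z = - lap u z"
    and "z \<in> U \<Longrightarrow> Xop (\<lambda>y. - u y) z = - Xop u z"
proof -
  have fd: "frechet_derivative (\<lambda>y. - u y) (at x) = (\<lambda>v. - frechet_derivative u (at x) v)" if "x \<in> U" for x
  proof -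
    have "((\<lambda>y. - u y) has_derivative (\<lambda>v. - frechet_derivative u (at x) v)) (at x)"
      using has_derivative_minus[OF du[rule_format, OF that, unfolded frechet_derivative_works]] .
    from frechet_derivative_at[OF this] show ?thesis by simp
  qed
  show "\<forall>x\<in>U. (\<lambda>y. - u y) differentiable (at x)" using du by (simp add: differentiable_minus)
  have d2n: "((\<lambda>y. frechet_derivative (\<lambda>y. - u y) (at y) v) has_derivative (\<lambda>w. - D2 u x v w)) (at x)"
    if "x \<in> U" for x v
  proof -
    have "((\<lambda>y. frechet_derivative u (at y) v) has_derivative (\<lambda>w. D2 u x v w)) (at x)"
      using d2 that unfolding D2_def by (simp add: frechet_derivative_works)
    from has_derivative_minus[OF this]
    show ?thesis
      by (rule has_derivative_transform_within_open[OF _ U that]) (simp add: fd)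
  qed
  show "\<forall>v. \<forall>x\<in>U. (\<lambda>y. frechet_derivative (\<lambda>y. - u y) (at y) v) differentiable (at x)"
    using d2n by (auto simp: differentiable_def)
  assume z: "z \<in> U"
  have D2n: "D2 (\<lambda>y. - u y) z v w = - D2 u z v w" for v w
    unfolding D2_def[of "\<lambda>y. - u y"] using fun_cong[OF frechet_derivative_at[OF d2n[OF z, of v]], of w] by simp
  have hn: "hessC (\<lambda>y. - u y) z = - hessC u z"
    by (simp add: hessC_def D2n vec_eq_iff complex_eq_iff) (simp add: field_simps)
  show "lap (\<lambda>y. - u y) z = - lap u z"
    unfolding lap_def hn by (simp add: trace_def matrix_matrix_mult_def sum_negf)
  show "Xop (\<lambda>y. - u y) z = - Xop u z" by (simp add: Xop_def fd[OF z])
qed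


lemma norm_axis_c: "norm (axis i (1::complex) :: complex^'n::finite) = 1"
  by (simp add: norm_eq_sqrt_inner inner_axis_axis)

lemma wgt_eq: "(y::complex^'n::finite) \<noteq> 0 \<Longrightarrow> wgt \<delta> y = exp (\<delta> * phi CARD('n) (ln (y \<bullet> y)))"
  by (simp add: wgt_def phiz_def power2_norm_eq_inner)

lemma wgt_ex: "(y::complex^'n::finite) \<noteq> 0 \<Longrightarrow> wgt \<delta> y * ex CARD('n) \<delta> (ln (y \<bullet> y)) = 1"
  by (simp add: wgt_eq ex_def exp_add[symmetric])

lemma wgt_ge1: "0 \<le> \<delta> \<Longrightarrow> wgt \<delta> (y::complex^'n::finite) \<ge> 1"
  using phi_prop(1)[OF card_ge1[where 'n='n]] by (auto simp: wgt_def phiz_def less_imp_le)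

lemma wgt0: "wgt \<delta> (0::complex^'n::finite) = 1"
  by (simp add: wgt_def phiz_def)

lemma ex_pos: "ex n k t > 0" by (simp add: ex_def)

lemma u_le_from_w:
  fixes y :: "complex^'n::finite"
  assumes "y \<noteq> 0" "wgt \<delta> y * u y \<le> M"
  shows "u y \<le> M * ex CARD('n) \<delta> (ln (y \<bullet> y))"
proof -
  have "u y = (wgt \<delta> y * u y) * ex CARD('n) \<delta> (ln (y \<bullet> y))"
    using wgt_ex[OF assms(1), of \<delta>] by (simp add: algebra_simps)
  also have "\<dots> \<le> M * ex CARD('n) \<delta> (ln (y \<bullet> y))"
    using assms(2) ex_pos by (simp add: mult_right_mono)
  finally show ?thesis .
qed

lemma u_gt_from_w:
  fixes y :: "complex^'n::finite"
  assumes "y \<noteq> 0" "wgt \<delta> y * u y > M"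
  shows "u y > M * ex CARD('n) \<delta> (ln (y \<bullet> y))"
proof -
  have "u y = (wgt \<delta> y * u y) * ex CARD('n) \<delta> (ln (y \<bullet> y))"
    using wgt_ex[OF assms(1), of \<delta>] by (simp add: algebra_simps)
  also have "\<dots> > M * ex CARD('n) \<delta> (ln (y \<bullet> y))"
    using assms(2) ex_pos by (simp add: mult_strict_right_mono)
  finally show ?thesis .
qed

lemma exists_norm: "r \<ge> 0 \<Longrightarrow> \<exists>y::complex^'n::finite. norm y = r"
  by (rule exI[of _ "r *\<^sub>R axis undefined 1"]) (simp add: norm_axis_c)

lemma h12_deriv:
  assumes n: "n \<ge> 1"
  shows "\<And>t. ((\<lambda>t. M * ex n \<delta> t - \<epsilon> * (t - t0)) has_real_derivative M * ex1 n \<delta> t - \<epsilon>) (at t)"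
    and "\<And>t. ((\<lambda>t. M * ex1 n \<delta> t - \<epsilon>) has_real_derivative M * ex2 n \<delta> t) (at t)"
proof -
  fix t
  show "((\<lambda>t. M * ex n \<delta> t - \<epsilon> * (t - t0)) has_real_derivative M * ex1 n \<delta> t - \<epsilon>) (at t)"
    using DERIV_diff[OF DERIV_cmult[OF ex_deriv[OF n]] DERIV_cmult[OF DERIV_diff[OF DERIV_ident DERIV_const]]]
    by simp
  show "((\<lambda>t. M * ex1 n \<delta> t - \<epsilon>) has_real_derivative M * ex2 n \<delta> t) (at t)"
    using DERIV_diff[OF DERIV_cmult[OF ex1_deriv[OF n]] DERIV_const] by simp
qed

lemma h3_deriv:
  assumes n: "n \<ge> 1"
  shows "\<And>t. ((\<lambda>t. M * ex n \<delta> t + \<epsilon> * ex n (\<delta>/2) t) has_real_derivative M * ex1 n \<delta> t + \<epsilon> * ex1 n (\<delta>/2) t) (at t)"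
    and "\<And>t. ((\<lambda>t. M * ex1 n \<delta> t + \<epsilon> * ex1 n (\<delta>/2) t) has_real_derivative M * ex2 n \<delta> t + \<epsilon> * ex2 n (\<delta>/2) t) (at t)"
proof -
  fix t
  show "((\<lambda>t. M * ex n \<delta> t + \<epsilon> * ex n (\<delta>/2) t) has_real_derivative M * ex1 n \<delta> t + \<epsilon> * ex1 n (\<delta>/2) t) (at t)"
    by (intro DERIV_add DERIV_cmult ex_deriv[OF n])
  show "((\<lambda>t. M * ex1 n \<delta> t + \<epsilon> * ex1 n (\<delta>/2) t) has_real_derivative M * ex2 n \<delta> t + \<epsilon> * ex2 n (\<delta>/2) t) (at t)"
    by (intro DERIV_add DERIV_cmult ex1_deriv[OF n])
qed



lemma core1:
  fixes u :: "complex^'n::finite \<Rightarrow> real"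
  assumes d: "0 < \<delta>" "\<delta> < 1" and R: "R > 0"
    and U: "open U" "cball 0 R \<subseteq> U"
    and du: "\<forall>x\<in>U. u differentiable (at x)"
    and d2: "\<forall>v. \<forall>x\<in>U. (\<lambda>y. frechet_derivative u (at y) v) differentiable (at x)"
    and hS: "\<And>y. norm y = R \<Longrightarrow> wgt \<delta> y * u y \<le> a"
    and hL: "\<And>y. norm y \<le> R \<Longrightarrow> wgt \<delta> y * \<bar>lap u y - Xop u y\<bar> \<le> b"
    and M: "a \<le> M" "b / (4 * \<delta> * (1 - \<delta>) * real CARD('n)) \<le> M" "0 \<le> M"
    and p: "norm p \<le> R"
  shows "wgt \<delta> p * u p \<le> M"
proof (rule ccontr)
  define n where "n = CARD('n)"
  have n: "n \<ge> 1" by (simp add: n_def card_ge1)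
  assume "\<not> wgt \<delta> p * u p \<le> M"
  then have pbad: "wgt \<delta> p * u p > M" by simp
  obtain p' :: "complex^'n" where p': "p' \<noteq> 0" "norm p' \<le> R" "wgt \<delta> p' * u p' > M"
  proof (cases "p = 0")
    case False
    then show ?thesis using that p pbad by blast
  next
    case True
    then have u0: "u 0 > M" using pbad by (simp add: wgt0)
    have "(0::complex^'n) \<in> U" using U R by auto
    then have "isCont u 0" using du differentiable_imp_continuous_within by blast
    then obtain d0 where d0: "d0 > 0" "\<And>y. dist y 0 < d0 \<Longrightarrow> dist (u y) (u 0) < u 0 - M"
      using u0 unfolding continuous_at_eps_delta by (metis diff_gt_0_iff_gt)
    define r where "r = min d0 R / 2"
    have r: "r > 0" "r < d0" "r \<le> R" using d0 R by (auto simp: r_def)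
    obtain y :: "complex^'n" where y: "norm y = r" using exists_norm r by (meson less_imp_le)
    have "dist (u y) (u 0) < u 0 - M" using d0(2)[of y] y r by simp
    then have uy: "u y > M" by (simp add: dist_real_def abs_less_iff)
    have "wgt \<delta> y * u y \<ge> 1 * u y" using wgt_ge1[of \<delta> y] d uy M(3)
      by (intro mult_right_mono) auto
    then have "wgt \<delta> y * u y > M" using uy by simp
    moreover have "y \<noteq> 0" using y r by auto
    ultimately show ?thesis using that y r by auto
  qed
  define t0 where "t0 = ln (R\<^sup>2)"
  define s' where "s' = p' \<bullet> p'"
  have s': "s' > 0" "s' \<le> R\<^sup>2" using p' by (auto simp: s'_def power2_norm_eq_inner[symmetric] power_mono)
  define e0 where "e0 = ex n \<delta> (ln s')"
  define gap where "gap = u p' - M * e0"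
  have gap: "gap > 0" using u_gt_from_w[where u=u and M=M and \<delta>=\<delta> and y=p', OF p'(1) p'(3)] by (simp add: gap_def e0_def n_def s'_def)
  define D where "D = t0 - ln s'"
  have D: "D \<ge> 0" using s' R by (simp add: D_def t0_def)
  define \<epsilon> where "\<epsilon> = gap / (D + 1)"
  have eps: "\<epsilon> > 0" using gap D by (simp add: \<epsilon>_def)
  have epsD: "\<epsilon> * D < gap" using gap D by (simp add: \<epsilon>_def field_simps)
  define h where "h t = M * ex n \<delta> t - \<epsilon> * (t - t0)" for t
  define h1 where "h1 t = M * ex1 n \<delta> t - \<epsilon>" for t
  define h2 where "h2 t = M * ex2 n \<delta> t" for t
  define H where "H s = h (ln s)" for s
  define H1 where "H1 s = h1 (ln s) / s" for s
  define H2 where "H2 s = (h2 (ln s) - h1 (ln s)) / s\<^sup>2" for s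
  have dh: "(h has_real_derivative h1 t) (at t)" for t
    unfolding h_def[abs_def] h1_def by (rule h12_deriv(1)[OF n])
  have dh1: "(h1 has_real_derivative h2 t) (at t)" for t
    unfolding h1_def[abs_def] h2_def by (rule h12_deriv(2)[OF n])
  have dH: "(H has_real_derivative H1 s) (at s)" if "s > 0" for s
    unfolding H_def[abs_def] H1_def by (rule lnchain1[OF dh that])
  have dH1: "(H1 has_real_derivative H2 s) (at s)" if "s > 0" for s
    unfolding H1_def[abs_def] H2_def by (rule lnchain2[OF dh1 that])
  obtain xm where xm: "xm \<in> cball (0::complex^'n) R" "\<forall>y\<in>cball 0 R. u y \<le> u xm"
  proof -
    have "continuous_on (cball (0::complex^'n) R) u"
      using du U by (meson continuous_at_imp_continuous_on differentiable_imp_continuous_within subsetD)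
    then show ?thesis using continuous_attains_sup[OF compact_cball, of 0 R u] R that by auto
  qed
  define C where "C = \<bar>u xm\<bar>"
  have C: "\<And>y. norm y \<le> R \<Longrightarrow> u y \<le> C" using xm by (force simp: C_def)
  define \<rho> where "\<rho> = min (norm p' / 2) (exp ((t0 - C / \<epsilon>) / 2))"
  have np: "norm p' > 0" using p' by simp
  have r1: "\<rho> \<le> norm p' / 2" by (simp add: \<rho>_def)
  have r2: "\<rho> > 0" using np by (simp add: \<rho>_def)
  have rho: "\<rho> > 0" "\<rho> < norm p'" "\<rho> \<le> R"
    using np p'(2) r1 r2 by linarith+
  have lnrho: "ln (\<rho>\<^sup>2) \<le> t0 - C / \<epsilon>"
  proof -
    have "\<rho> \<le> exp ((t0 - C / \<epsilon>) / 2)" by (simp add: \<rho>_def)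
    then have "ln \<rho> \<le> ln (exp ((t0 - C / \<epsilon>) / 2))" using rho by (subst ln_le_cancel_iff) auto
    then have "ln \<rho> \<le> (t0 - C / \<epsilon>) / 2" by simp
    then show ?thesis using rho by (simp add: ln_realpow)
  qed
  have Hdef: "H (y \<bullet> y) = M * ex n \<delta> (ln (y \<bullet> y)) - \<epsilon> * (ln (y \<bullet> y) - t0)" for y :: "complex^'n"
    by (simp add: H_def h_def)
  have "\<exists>q. \<rho> < norm q \<and> norm q < R \<and> lap u q - Xop u q \<le> LR CARD('n) (q \<bullet> q) (H1 (q \<bullet> q)) (H2 (q \<bullet> q))"
  proof (rule annulus_max[OF U(1) _ rho(1) du d2 dH dH1])
    show "{y. \<rho> \<le> norm y \<and> norm y \<le> R} \<subseteq> U" using U(2) by auto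
  next
    fix y :: "complex^'n"
    assume y: "\<rho> \<le> norm y" "norm y \<le> R" "norm y = \<rho> \<or> norm y = R"
    have y0: "y \<noteq> 0" using y rho by auto
    have yy: "y \<bullet> y = (norm y)\<^sup>2" by (simp add: power2_norm_eq_inner)
    show "u y - H (y \<bullet> y) \<le> 0"
    proof (cases "norm y = R")
      case True
      have "u y \<le> M * ex n \<delta> (ln (y \<bullet> y))"
        using u_le_from_w[where u=u and M=M and \<delta>=\<delta>, OF y0] hS[OF True] M(1) by (simp add: n_def)
      then show ?thesis using True unfolding Hdef by (simp add: yy t0_def)
    next
      case False
      then have ny: "norm y = \<rho>" using y by simp
      have "u y \<le> C" using C y by simp
      moreover have "M * ex n \<delta> (ln (y \<bullet> y)) \<ge> 0" using M(3) ex_pos[of n \<delta> "ln (y \<bullet> y)"] by simp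
      moreover have "\<epsilon> * (ln (y \<bullet> y) - t0) \<le> - C"
      proof -
        have "ln (y \<bullet> y) - t0 \<le> - C / \<epsilon>" using lnrho ny yy by simp
        then have "\<epsilon> * (ln (y \<bullet> y) - t0) \<le> \<epsilon> * (- C / \<epsilon>)" using eps by (intro mult_left_mono) auto
        moreover have "\<epsilon> * (- C / \<epsilon>) = - C" using eps by simp
        ultimately show ?thesis by simp
      qed
      ultimately show ?thesis by (simp add: Hdef)
    qed
  next
    show "\<rho> \<le> norm p'" "norm p' \<le> R" using rho p' by auto
    show "u p' - H (p' \<bullet> p') > 0"
      using gap epsD unfolding Hdef by (simp add: gap_def e0_def s'_def[symmetric] D_def algebra_simps)
  qed
  then obtain q :: "complex^'n" where q: "\<rho> < norm q" "norm q < R"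
    "lap u q - Xop u q \<le> LR n (q \<bullet> q) (H1 (q \<bullet> q)) (H2 (q \<bullet> q))" by (auto simp: n_def)
  have q0: "q \<noteq> 0" using q rho by auto
  have sq: "q \<bullet> q > 0" using q0 by simp
  show False
  proof (rule barrier12[OF n d sq M(3) eps])
    show "exp (\<delta> * phi n (ln (q \<bullet> q))) * \<bar>lap u q - Xop u q\<bar> \<le> b"
      using hL[of q] q wgt_eq[OF q0, of \<delta>] by (simp add: n_def)
    show "lap u q - Xop u q \<le> LR n (q \<bullet> q) ((M * ex1 n \<delta> (ln (q \<bullet> q)) - \<epsilon>) / (q \<bullet> q))
             ((M * ex2 n \<delta> (ln (q \<bullet> q)) - (M * ex1 n \<delta> (ln (q \<bullet> q)) - \<epsilon>)) / (q \<bullet> q)\<^sup>2)"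
      using q(3) by (simp add: H1_def H2_def h1_def h2_def)
    show "b / (4 * \<delta> * (1 - \<delta>) * real n) \<le> M" using M(2) by (simp add: n_def)
  qed
qed


lemma core2:
  fixes u :: "complex^'n::finite \<Rightarrow> real"
  assumes d: "0 < \<delta>" "\<delta> < 1" and r0: "1 \<le> r0"
    and U: "open U" "{y. 1 \<le> norm y \<and> norm y \<le> r0} \<subseteq> U"
    and du: "\<forall>x\<in>U. u differentiable (at x)"
    and d2: "\<forall>v. \<forall>x\<in>U. (\<lambda>y. frechet_derivative u (at y) v) differentiable (at x)"
    and hS: "\<And>y. norm y = 1 \<Longrightarrow> wgt \<delta> y * u y \<le> a"
    and h0: "\<And>y. norm y = r0 \<Longrightarrow> u y = 0"
    and hL: "\<And>y. 1 \<le> norm y \<Longrightarrow> norm y \<le> r0 \<Longrightarrow> wgt \<delta> y * \<bar>lap u y - Xop u y\<bar> \<le> b"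
    and M: "a \<le> M" "b / (4 * \<delta> * (1 - \<delta>) * real CARD('n)) \<le> M" "0 \<le> M"
    and p: "1 \<le> norm p" "norm p \<le> r0"
  shows "wgt \<delta> p * u p \<le> M"
proof (rule ccontr)
  define n where "n = CARD('n)"
  have n: "n \<ge> 1" by (simp add: n_def card_ge1)
  assume "\<not> wgt \<delta> p * u p \<le> M"
  then have pbad: "wgt \<delta> p * u p > M" by simp
  have p0: "p \<noteq> 0" using p by auto
  define t0 where "t0 = ln (r0\<^sup>2)"
  have t0: "t0 \<ge> 0" using r0 by (simp add: t0_def)
  define s' where "s' = p \<bullet> p"
  have s': "s' > 0" "s' \<le> r0\<^sup>2" using p p0 by (auto simp: s'_def power2_norm_eq_inner[symmetric] power_mono)
  define e0 where "e0 = ex n \<delta> (ln s')"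
  define gap where "gap = u p - M * e0"
  have gap: "gap > 0" using u_gt_from_w[where u=u and M=M and \<delta>=\<delta> and y=p, OF p0 pbad] by (simp add: gap_def e0_def n_def s'_def)
  define D where "D = t0 - ln s'"
  have D: "D \<ge> 0" using s' r0 by (simp add: D_def t0_def)
  define \<epsilon> where "\<epsilon> = gap / (D + 1)"
  have eps: "\<epsilon> > 0" using gap D by (simp add: \<epsilon>_def)
  have epsD: "\<epsilon> * D < gap" using gap D by (simp add: \<epsilon>_def field_simps)
  define h where "h t = M * ex n \<delta> t - \<epsilon> * (t - t0)" for t
  define h1 where "h1 t = M * ex1 n \<delta> t - \<epsilon>" for t
  define h2 where "h2 t = M * ex2 n \<delta> t" for t
  define H where "H s = h (ln s)" for s
  define H1 where "H1 s = h1 (ln s) / s" for s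
  define H2 where "H2 s = (h2 (ln s) - h1 (ln s)) / s\<^sup>2" for s
  have dh: "(h has_real_derivative h1 t) (at t)" for t
    unfolding h_def[abs_def] h1_def by (rule h12_deriv(1)[OF n])
  have dh1: "(h1 has_real_derivative h2 t) (at t)" for t
    unfolding h1_def[abs_def] h2_def by (rule h12_deriv(2)[OF n])
  have dH: "(H has_real_derivative H1 s) (at s)" if "s > 0" for s
    unfolding H_def[abs_def] H1_def by (rule lnchain1[OF dh that])
  have dH1: "(H1 has_real_derivative H2 s) (at s)" if "s > 0" for s
    unfolding H1_def[abs_def] H2_def by (rule lnchain2[OF dh1 that])
  have Hdef: "H (y \<bullet> y) = M * ex n \<delta> (ln (y \<bullet> y)) - \<epsilon> * (ln (y \<bullet> y) - t0)" for y :: "complex^'n"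
    by (simp add: H_def h_def)
  have "\<exists>q. 1 < norm q \<and> norm q < r0 \<and> lap u q - Xop u q \<le> LR CARD('n) (q \<bullet> q) (H1 (q \<bullet> q)) (H2 (q \<bullet> q))"
  proof (rule annulus_max[OF U(1) U(2) zero_less_one du d2 dH dH1])
    fix y :: "complex^'n"
    assume y: "1 \<le> norm y" "norm y \<le> r0" "norm y = 1 \<or> norm y = r0"
    have y0: "y \<noteq> 0" using y by auto
    have yy: "y \<bullet> y = (norm y)\<^sup>2" by (simp add: power2_norm_eq_inner)
    have Me: "M * ex n \<delta> (ln (y \<bullet> y)) \<ge> 0" using M(3) ex_pos[of n \<delta> "ln (y \<bullet> y)"] by simp
    show "u y - H (y \<bullet> y) \<le> 0"
    proof (cases "norm y = 1")
      case True
      have "u y \<le> M * ex n \<delta> (ln (y \<bullet> y))"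
        using u_le_from_w[where u=u and M=M and \<delta>=\<delta>, OF y0] hS[OF True] M(1) by (simp add: n_def)
      moreover have "ln (y \<bullet> y) = 0" using True yy by simp
      moreover have "\<epsilon> * t0 \<ge> 0" using t0 eps by simp
      ultimately show ?thesis unfolding Hdef by simp
    next
      case False
      then have ny: "norm y = r0" using y by simp
      have "ln (y \<bullet> y) = t0" using ny yy by (simp add: t0_def)
      then show ?thesis using h0[OF ny] Me unfolding Hdef by simp
    qed
  next
    show "1 \<le> norm p" "norm p \<le> r0" using p by auto
    show "u p - H (p \<bullet> p) > 0"
      using gap epsD unfolding Hdef by (simp add: gap_def e0_def s'_def[symmetric] D_def algebra_simps)
  qed
  then obtain q :: "complex^'n" where q: "1 < norm q" "norm q < r0"
    "lap u q - Xop u q \<le> LR n (q \<bullet> q) (H1 (q \<bullet> q)) (H2 (q \<bullet> q))" by (auto simp: n_def)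
  have q0: "q \<noteq> 0" using q by auto
  have sq: "q \<bullet> q > 0" using q0 by simp
  show False
  proof (rule barrier12[OF n d sq M(3) eps])
    show "exp (\<delta> * phi n (ln (q \<bullet> q))) * \<bar>lap u q - Xop u q\<bar> \<le> b"
      using hL[of q] q wgt_eq[OF q0, of \<delta>] by (simp add: n_def)
    show "lap u q - Xop u q \<le> LR n (q \<bullet> q) ((M * ex1 n \<delta> (ln (q \<bullet> q)) - \<epsilon>) / (q \<bullet> q))
             ((M * ex2 n \<delta> (ln (q \<bullet> q)) - (M * ex1 n \<delta> (ln (q \<bullet> q)) - \<epsilon>)) / (q \<bullet> q)\<^sup>2)"
      using q(3) by (simp add: H1_def H2_def h1_def h2_def)
    show "b / (4 * \<delta> * (1 - \<delta>) * real n) \<le> M" using M(2) by (simp add: n_def)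
  qed
qed


lemma core3:
  fixes u :: "complex^'n::finite \<Rightarrow> real"
  assumes d: "0 < \<delta>" "\<delta> < 1"
    and U: "open U" "{y. 1 \<le> norm y} \<subseteq> U"
    and du: "\<forall>x\<in>U. u differentiable (at x)"
    and d2: "\<forall>v. \<forall>x\<in>U. (\<lambda>y. frechet_derivative u (at y) v) differentiable (at x)"
    and hS: "\<And>y. norm y = 1 \<Longrightarrow> wgt \<delta> y * u y \<le> a"
    and hB: "\<And>y. 1 \<le> norm y \<Longrightarrow> wgt \<delta> y * u y \<le> Mb"
    and hL: "\<And>y. 1 \<le> norm y \<Longrightarrow> wgt \<delta> y * \<bar>lap u y - Xop u y\<bar> \<le> b"
    and M: "a \<le> M" "b / (4 * \<delta> * (1 - \<delta>) * real CARD('n)) \<le> M" "0 \<le> M"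
    and p: "1 \<le> norm p"
  shows "wgt \<delta> p * u p \<le> M"
proof (rule ccontr)
  define n where "n = CARD('n)"
  have n: "n \<ge> 1" by (simp add: n_def card_ge1)
  assume "\<not> wgt \<delta> p * u p \<le> M"
  then have pbad: "wgt \<delta> p * u p > M" by simp
  have p0: "p \<noteq> 0" using p by auto
  define s' where "s' = p \<bullet> p"
  define e0 where "e0 = ex n \<delta> (ln s')"
  define e0' where "e0' = ex n (\<delta>/2) (ln s')"
  define gap where "gap = u p - M * e0"
  have gap: "gap > 0" using u_gt_from_w[where u=u and M=M and \<delta>=\<delta> and y=p, OF p0 pbad] by (simp add: gap_def e0_def n_def s'_def)
  have e0': "e0' > 0" by (simp add: e0'_def ex_pos)
  define \<epsilon> where "\<epsilon> = gap / (2 * e0')"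
  have eps: "\<epsilon> > 0" using gap e0' by (simp add: \<epsilon>_def)
  have epsg: "\<epsilon> * e0' < gap" using gap e0' by (simp add: \<epsilon>_def)
  define Mb' where "Mb' = max Mb 0 + 1"
  have Mb': "Mb' > 0" "Mb \<le> Mb'" by (auto simp: Mb'_def)
  define C where "C = max 1 (2 * ln (Mb' / \<epsilon>) / \<delta>)"
  have C: "C > 0" "C \<ge> 2 * ln (Mb' / \<epsilon>) / \<delta>" by (auto simp: C_def)
  define T1 where "T1 = ln (C ^ n * exp C) / real n"
  define R where "R = max (norm p + 1) (exp (T1 / 2))"
  have R: "R > norm p" "R \<ge> exp (T1 / 2)" by (auto simp: R_def)
  have R1: "R \<ge> 1" using R p by simp
  have lnR: "ln (R\<^sup>2) \<ge> T1"
  proof -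
    have "ln (exp (T1 / 2)) \<le> ln R" using R(2) R1 by (subst ln_le_cancel_iff) auto
    then show ?thesis using R1 by (simp add: ln_realpow)
  qed
  define h where "h t = M * ex n \<delta> t + \<epsilon> * ex n (\<delta>/2) t" for t
  define h1 where "h1 t = M * ex1 n \<delta> t + \<epsilon> * ex1 n (\<delta>/2) t" for t
  define h2 where "h2 t = M * ex2 n \<delta> t + \<epsilon> * ex2 n (\<delta>/2) t" for t
  define H where "H s = h (ln s)" for s
  define H1 where "H1 s = h1 (ln s) / s" for s
  define H2 where "H2 s = (h2 (ln s) - h1 (ln s)) / s\<^sup>2" for s
  have dh: "(h has_real_derivative h1 t) (at t)" for t
    unfolding h_def[abs_def] h1_def by (rule h3_deriv(1)[OF n])
  have dh1: "(h1 has_real_derivative h2 t) (at t)" for t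
    unfolding h1_def[abs_def] h2_def by (rule h3_deriv(2)[OF n])
  have dH: "(H has_real_derivative H1 s) (at s)" if "s > 0" for s
    unfolding H_def[abs_def] H1_def by (rule lnchain1[OF dh that])
  have dH1: "(H1 has_real_derivative H2 s) (at s)" if "s > 0" for s
    unfolding H1_def[abs_def] H2_def by (rule lnchain2[OF dh1 that])
  have Hdef: "H (y \<bullet> y) = M * ex n \<delta> (ln (y \<bullet> y)) + \<epsilon> * ex n (\<delta>/2) (ln (y \<bullet> y))" for y :: "complex^'n"
    by (simp add: H_def h_def)
  have "\<exists>q. 1 < norm q \<and> norm q < R \<and> lap u q - Xop u q \<le> LR CARD('n) (q \<bullet> q) (H1 (q \<bullet> q)) (H2 (q \<bullet> q))"
  proof (rule annulus_max[OF U(1) _ zero_less_one du d2 dH dH1])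
    show "{y. 1 \<le> norm y \<and> norm y \<le> R} \<subseteq> U" using U(2) by auto
  next
    fix y :: "complex^'n"
    assume y: "1 \<le> norm y" "norm y \<le> R" "norm y = 1 \<or> norm y = R"
    have y0: "y \<noteq> 0" using y by auto
    have yy: "y \<bullet> y = (norm y)\<^sup>2" by (simp add: power2_norm_eq_inner)
    have Me: "M * ex n \<delta> (ln (y \<bullet> y)) \<ge> 0" using M(3) ex_pos[of n \<delta> "ln (y \<bullet> y)"] by simp
    have Ee: "\<epsilon> * ex n (\<delta>/2) (ln (y \<bullet> y)) \<ge> 0" using eps ex_pos[of n "\<delta>/2" "ln (y \<bullet> y)"] by simp
    show "u y - H (y \<bullet> y) \<le> 0"
    proof (cases "norm y = 1")
      case True
      have "u y \<le> M * ex n \<delta> (ln (y \<bullet> y))"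
        using u_le_from_w[where u=u and M=M and \<delta>=\<delta>, OF y0] hS[OF True] M(1) by (simp add: n_def)
      then show ?thesis using Ee unfolding Hdef by simp
    next
      case False
      then have ny: "norm y = R" using y by simp
      define x where "x = ln (y \<bullet> y)"
      have xT: "x \<ge> T1" using lnR ny yy by (simp add: x_def)
      have phC: "phi n x \<ge> C" using phi_big[OF n C(1)] xT by (simp add: T1_def)
      have uy: "u y \<le> Mb' * ex n \<delta> x"
      proof -
        have "u y \<le> Mb * ex n \<delta> x" using u_le_from_w[where u=u and M=Mb and \<delta>=\<delta>, OF y0] hB y by (simp add: n_def x_def)
        also have "\<dots> \<le> Mb' * ex n \<delta> x" using Mb' ex_pos[of n \<delta> x] by (simp add: mult_right_mono)
        finally show ?thesis .
      qed
      have key: "Mb' * ex n \<delta> x \<le> \<epsilon> * ex n (\<delta>/2) x"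
      proof -
        have "ln (Mb' / \<epsilon>) \<le> \<delta> / 2 * phi n x"
        proof -
          have "2 * ln (Mb' / \<epsilon>) / \<delta> \<le> phi n x" using C(2) phC by linarith
          then show ?thesis using d by (simp add: divide_le_eq algebra_simps)
        qed
        then have "Mb' / \<epsilon> \<le> exp (\<delta> / 2 * phi n x)" 
        proof -
          have pos: "Mb' / \<epsilon> > 0" using Mb' eps by simp
          have "exp (ln (Mb' / \<epsilon>)) \<le> exp (\<delta> / 2 * phi n x)" using \<open>ln (Mb' / \<epsilon>) \<le> \<delta> / 2 * phi n x\<close> by simp
          then show ?thesis using pos by simp
        qed
        then have "Mb' \<le> \<epsilon> * exp (\<delta> / 2 * phi n x)" using eps by (simp add: divide_le_eq mult.commute)
        then have "Mb' * exp (- \<delta> * phi n x) \<le> \<epsilon> * exp (\<delta> / 2 * phi n x) * exp (- \<delta> * phi n x)"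
          by (simp add: mult_right_mono)
        also have "\<epsilon> * exp (\<delta> / 2 * phi n x) * exp (- \<delta> * phi n x) = \<epsilon> * exp (- (\<delta>/2) * phi n x)"
          by (simp add: mult.assoc exp_add[symmetric] algebra_simps)
        finally show ?thesis by (simp add: ex_def)
      qed
      show ?thesis using uy key Me unfolding Hdef x_def[symmetric] by simp
    qed
  next
    show "1 \<le> norm p" "norm p \<le> R" using p R by auto
    show "u p - H (p \<bullet> p) > 0"
      using gap epsg unfolding Hdef by (simp add: gap_def e0_def e0'_def s'_def[symmetric] algebra_simps)
  qed
  then obtain q :: "complex^'n" where q: "1 < norm q" "norm q < R"
    "lap u q - Xop u q \<le> LR n (q \<bullet> q) (H1 (q \<bullet> q)) (H2 (q \<bullet> q))" by (auto simp: n_def)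
  have q0: "q \<noteq> 0" using q by auto
  have sq: "q \<bullet> q > 0" using q0 by simp
  show False
  proof (rule barrier3[OF n d sq M(3) eps])
    show "exp (\<delta> * phi n (ln (q \<bullet> q))) * \<bar>lap u q - Xop u q\<bar> \<le> b"
      using hL[of q] q wgt_eq[OF q0, of \<delta>] by (simp add: n_def)
    show "lap u q - Xop u q \<le> LR n (q \<bullet> q) ((M * ex1 n \<delta> (ln (q \<bullet> q)) + \<epsilon> * ex1 n (\<delta>/2) (ln (q \<bullet> q))) / (q \<bullet> q))
                 ((M * ex2 n \<delta> (ln (q \<bullet> q)) + \<epsilon> * ex2 n (\<delta>/2) (ln (q \<bullet> q)) - (M * ex1 n \<delta> (ln (q \<bullet> q)) + \<epsilon> * ex1 n (\<delta>/2) (ln (q \<bullet> q)))) / (q \<bullet> q)\<^sup>2)"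
      using q(3) by (simp add: H1_def H2_def h1_def h2_def)
    show "b / (4 * \<delta> * (1 - \<delta>) * real n) \<le> M" using M(2) by (simp add: n_def)
  qed
qed



lemma esup_reduce:
  fixes S S1 S2 :: "'a set" and f g h :: "'a \<Rightarrow> real" and Kr :: real
  assumes ne: "S1 \<noteq> {}" "S2 \<noteq> {}" and Kr: "Kr > 0"
    and main: "\<And>a b. (\<forall>z\<in>S1. f z \<le> a) \<Longrightarrow> (\<forall>z\<in>S2. g z \<le> b) \<Longrightarrow> 0 \<le> a \<Longrightarrow> 0 \<le> b \<Longrightarrow> \<forall>z\<in>S. h z \<le> max a (Kr * b)"
    and fnn: "\<forall>z\<in>S1. f z \<ge> 0" "\<forall>z\<in>S2. g z \<ge> 0"
  shows "esup S h \<le> max (esup S1 f) (ereal Kr * esup S2 g)"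
proof (cases "esup S1 f = \<infinity> \<or> esup S2 g = \<infinity>")
  case True
  then have "max (esup S1 f) (ereal Kr * esup S2 g) = \<infinity>" using Kr by auto
  then show ?thesis by simp
next
  case False
  obtain z1 where z1: "z1 \<in> S1" using ne by auto
  obtain z2 where z2: "z2 \<in> S2" using ne by auto
  have fu: "ereal (f z) \<le> esup S1 f" if "z \<in> S1" for z unfolding esup_def using that by (rule SUP_upper)
  have gu: "ereal (g z) \<le> esup S2 g" if "z \<in> S2" for z unfolding esup_def using that by (rule SUP_upper)
  have f1: "esup S1 f \<noteq> - \<infinity>" using fu[OF z1] by auto
  have g1: "esup S2 g \<noteq> - \<infinity>" using gu[OF z2] by auto
  define a where "a = real_of_ereal (esup S1 f)"
  define b where "b = real_of_ereal (esup S2 g)"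
  have ea: "esup S1 f = ereal a" using False f1 by (cases "esup S1 f") (auto simp: a_def)
  have eb: "esup S2 g = ereal b" using False g1 by (cases "esup S2 g") (auto simp: b_def)
  have fa: "\<forall>z\<in>S1. f z \<le> a" using fu ea by simp
  have gb: "\<forall>z\<in>S2. g z \<le> b" using gu eb by simp
  have a0: "0 \<le> a" using fa fnn z1 by force
  have b0: "0 \<le> b" using gb fnn z2 by force
  have hz: "\<forall>z\<in>S. h z \<le> max a (Kr * b)" by (rule main[OF fa gb a0 b0])
  have "esup S h \<le> ereal (max a (Kr * b))"
  proof (unfold esup_def, rule SUP_least)
    fix z assume "z \<in> S"
    then have "h z \<le> max a (Kr * b)" using hz by blast
    then show "ereal (h z) \<le> ereal (max a (Kr * b))" by (simp only: ereal_less_eq(3))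
  qed
  also have "\<dots> = max (esup S1 f) (ereal Kr * esup S2 g)" by (simp add: ea eb)
  finally show ?thesis .
qed


lemma both_signs: "w \<ge> 0 \<Longrightarrow> w * x \<le> M \<Longrightarrow> w * (- x) \<le> M \<Longrightarrow> w * \<bar>x\<bar> \<le> (M::real)"
  by (cases "x \<ge> 0") auto

lemma wgt_pos: "wgt \<delta> z > 0" by (simp add: wgt_def)

lemma wabs: "wgt \<delta> z * x \<le> wgt \<delta> z * \<bar>x\<bar>"
  using wgt_pos[of \<delta> z] by (intro mult_left_mono) auto

lemma wabsn: "wgt \<delta> z * (- x) \<le> wgt \<delta> z * \<bar>x\<bar>"
  using wgt_pos[of \<delta> z] by (intro mult_left_mono) auto

theorem lemma4p2:
  fixes \<delta> :: real
  assumes "0 < \<delta>" and "\<delta> < 1"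
  defines "K \<equiv> ereal (1 / (4 * \<delta> * (1 - \<delta>) * real CARD('n)))"
  shows
    "(\<forall>(t0::real) (u :: complex^'n::finite \<Rightarrow> real).
        C2_on {z. (norm z)\<^sup>2 \<le> exp t0} u \<longrightarrow>
        esup {z. (norm z)\<^sup>2 \<le> exp t0} (\<lambda>z. wgt \<delta> z * \<bar>u z\<bar>)
          \<le> max (esup {z. (norm z)\<^sup>2 = exp t0} (\<lambda>z. wgt \<delta> z * \<bar>u z\<bar>))
                 (K * esup {z. (norm z)\<^sup>2 \<le> exp t0} (\<lambda>z. wgt \<delta> z * \<bar>lap u z - Xop u z\<bar>)))
     \<and>
     (\<forall>(r0::real) (u :: complex^'n \<Rightarrow> real).
        1 \<le> r0 \<longrightarrow> C2_on {z. 1 \<le> norm z \<and> norm z \<le> r0} u \<longrightarrow>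
        (\<forall>z. norm z = r0 \<longrightarrow> u z = 0) \<longrightarrow>
        esup {z. 1 \<le> norm z \<and> norm z \<le> r0} (\<lambda>z. wgt \<delta> z * \<bar>u z\<bar>)
          \<le> max (esup {z. norm z = 1} (\<lambda>z. wgt \<delta> z * \<bar>u z\<bar>))
                 (K * esup {z. 1 \<le> norm z \<and> norm z \<le> r0} (\<lambda>z. wgt \<delta> z * \<bar>lap u z - Xop u z\<bar>)))
     \<and>
     (\<forall>(u :: complex^'n \<Rightarrow> real).
        C2_delta \<delta> {z. 1 \<le> norm z} u \<longrightarrow>
        esup {z. 1 \<le> norm z} (\<lambda>z. wgt \<delta> z * \<bar>u z\<bar>)
          \<le> max (esup {z. norm z = 1} (\<lambda>z. wgt \<delta> z * \<bar>u z\<bar>))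
                 (K * esup {z. 1 \<le> norm z} (\<lambda>z. wgt \<delta> z * \<bar>lap u z - Xop u z\<bar>)))"
proof -
  define Kr where "Kr = 1 / (4 * \<delta> * (1 - \<delta>) * real CARD('n))"
  have Kr: "Kr > 0" using assms(1,2) by (simp add: Kr_def)
  have Keq: "K = ereal Kr" by (simp add: K_def Kr_def)
  have Mb: "b / (4 * \<delta> * (1 - \<delta>) * real CARD('n)) \<le> max a (Kr * b)" for a b
    by (simp add: Kr_def)
  have Mnn: "0 \<le> max a (Kr * b)" if "0 \<le> a" for a b using that by simp
  have d: "0 < \<delta>" "\<delta> < 1" using assms by auto
  have P1: "\<forall>(t0::real) (u :: complex^'n::finite \<Rightarrow> real).
        C2_on {z. (norm z)\<^sup>2 \<le> exp t0} u \<longrightarrow>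
        esup {z. (norm z)\<^sup>2 \<le> exp t0} (\<lambda>z. wgt \<delta> z * \<bar>u z\<bar>)
          \<le> max (esup {z. (norm z)\<^sup>2 = exp t0} (\<lambda>z. wgt \<delta> z * \<bar>u z\<bar>))
                 (K * esup {z. (norm z)\<^sup>2 \<le> exp t0} (\<lambda>z. wgt \<delta> z * \<bar>lap u z - Xop u z\<bar>))"
  proof (intro allI impI)
    fix t0 :: real and u :: "complex^'n \<Rightarrow> real"
    assume "C2_on {z. (norm z)\<^sup>2 \<le> exp t0} u"
    then obtain U where U: "open U" "{z. (norm z)\<^sup>2 \<le> exp t0} \<subseteq> U"
      and du: "\<forall>x\<in>U. u differentiable (at x)"
      and d2: "\<forall>v. \<forall>x\<in>U. (\<lambda>y. frechet_derivative u (at y) v) differentiable (at x)"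
      unfolding C2_on_def by blast
    define R where "R = exp (t0 / 2)"
    have R: "R > 0" by (simp add: R_def)
    have R2: "R\<^sup>2 = exp t0" by (simp add: R_def power2_eq_square exp_add[symmetric])
    have iff1: "(norm z)\<^sup>2 \<le> exp t0 \<longleftrightarrow> norm z \<le> R" for z :: "complex^'n"
      unfolding R2[symmetric] using R by (simp add: power2_le_iff_abs_le)
    have iff2: "(norm z)\<^sup>2 = exp t0 \<longleftrightarrow> norm z = R" for z :: "complex^'n"
      unfolding R2[symmetric] using R by (metis norm_ge_zero power2_eq_iff_nonneg less_imp_le)
    have S: "{z::complex^'n. (norm z)\<^sup>2 \<le> exp t0} = cball 0 R" by (auto simp: iff1)
    have S1: "{z::complex^'n. (norm z)\<^sup>2 = exp t0} = {z. norm z = R}" by (auto simp: iff2)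
    have UU: "cball 0 R \<subseteq> U" using U(2) S by simp
    note nU = neg_C2[OF U(1) du d2]
    show "esup {z. (norm z)\<^sup>2 \<le> exp t0} (\<lambda>z. wgt \<delta> z * \<bar>u z\<bar>)
          \<le> max (esup {z. (norm z)\<^sup>2 = exp t0} (\<lambda>z. wgt \<delta> z * \<bar>u z\<bar>))
                 (K * esup {z. (norm z)\<^sup>2 \<le> exp t0} (\<lambda>z. wgt \<delta> z * \<bar>lap u z - Xop u z\<bar>))"
      unfolding Keq S S1
    proof (rule esup_reduce[OF _ _ Kr])
      show "{z::complex^'n. norm z = R} \<noteq> {}" using exists_norm[of R] R by auto
      show "cball (0::complex^'n) R \<noteq> {}" using R by auto
      show "\<forall>z\<in>{z. norm z = R}. 0 \<le> wgt \<delta> z * \<bar>u z\<bar>" by (simp add: wgt_def)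
      show "\<forall>z\<in>cball 0 R. 0 \<le> wgt \<delta> z * \<bar>lap u z - Xop u z\<bar>" by (simp add: wgt_def)
      fix a b
      assume fa: "\<forall>z\<in>{z. norm z = R}. wgt \<delta> z * \<bar>u z\<bar> \<le> a"
        and gb: "\<forall>z\<in>cball 0 R. wgt \<delta> z * \<bar>lap u z - Xop u z\<bar> \<le> b"
        and a0: "0 \<le> a" and b0: "0 \<le> b"
      show "\<forall>z\<in>cball 0 R. wgt \<delta> z * \<bar>u z\<bar> \<le> max a (Kr * b)"
      proof
        fix z :: "complex^'n" assume z: "z \<in> cball 0 R"
        have up: "wgt \<delta> z * u z \<le> max a (Kr * b)"
        proof (rule core1[OF d R U(1) UU du d2])
          show "wgt \<delta> y * u y \<le> a" if "norm y = R" for y using fa that wabs[of \<delta> y "u y"] by force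
          show "wgt \<delta> y * \<bar>lap u y - Xop u y\<bar> \<le> b" if "norm y \<le> R" for y using gb that by simp
        qed (use z a0 Mb Mnn in auto)
        have um: "wgt \<delta> z * (- u z) \<le> max a (Kr * b)"
        proof (rule core1[OF d R U(1) UU nU(1) nU(2)])
          show "wgt \<delta> y * - u y \<le> a" if "norm y = R" for y using fa that wabsn[of \<delta> y "u y"] by force
          show "wgt \<delta> y * \<bar>lap (\<lambda>y. - u y) y - Xop (\<lambda>y. - u y) y\<bar> \<le> b" if "norm y \<le> R" for y
          proof -
            have yU: "y \<in> U" using UU that by auto
            have "wgt \<delta> y * \<bar>lap u y - Xop u y\<bar> \<le> b" using gb that by simp
            then show ?thesis using nU(3)[OF yU] nU(4)[OF yU] by (simp add: abs_minus_commute)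
          qed
        qed (use z a0 Mb Mnn in auto)
        show "wgt \<delta> z * \<bar>u z\<bar> \<le> max a (Kr * b)"
          using both_signs[OF less_imp_le[OF wgt_pos] up um] .
      qed
    qed
  qed
  have P2: "\<forall>(r0::real) (u :: complex^'n \<Rightarrow> real).
        1 \<le> r0 \<longrightarrow> C2_on {z. 1 \<le> norm z \<and> norm z \<le> r0} u \<longrightarrow>
        (\<forall>z. norm z = r0 \<longrightarrow> u z = 0) \<longrightarrow>
        esup {z. 1 \<le> norm z \<and> norm z \<le> r0} (\<lambda>z. wgt \<delta> z * \<bar>u z\<bar>)
          \<le> max (esup {z. norm z = 1} (\<lambda>z. wgt \<delta> z * \<bar>u z\<bar>))
                 (K * esup {z. 1 \<le> norm z \<and> norm z \<le> r0} (\<lambda>z. wgt \<delta> z * \<bar>lap u z - Xop u z\<bar>))"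
  proof (intro allI impI)
    fix r0 :: real and u :: "complex^'n \<Rightarrow> real"
    assume r0: "1 \<le> r0" and "C2_on {z. 1 \<le> norm z \<and> norm z \<le> r0} u" and h0: "\<forall>z. norm z = r0 \<longrightarrow> u z = 0"
    then obtain U where U: "open U" "{z. 1 \<le> norm z \<and> norm z \<le> r0} \<subseteq> U"
      and du: "\<forall>x\<in>U. u differentiable (at x)"
      and d2: "\<forall>v. \<forall>x\<in>U. (\<lambda>y. frechet_derivative u (at y) v) differentiable (at x)"
      unfolding C2_on_def by blast
    note nU = neg_C2[OF U(1) du d2]
    show "esup {z. 1 \<le> norm z \<and> norm z \<le> r0} (\<lambda>z. wgt \<delta> z * \<bar>u z\<bar>)
          \<le> max (esup {z. norm z = 1} (\<lambda>z. wgt \<delta> z * \<bar>u z\<bar>))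
                 (K * esup {z. 1 \<le> norm z \<and> norm z \<le> r0} (\<lambda>z. wgt \<delta> z * \<bar>lap u z - Xop u z\<bar>))"
      unfolding Keq
    proof (rule esup_reduce[OF _ _ Kr])
      obtain y1 :: "complex^'n" where y1: "norm y1 = 1" using exists_norm[of 1] by auto
      show "{z::complex^'n. norm z = 1} \<noteq> {}" using y1 by auto
      show "{z::complex^'n. 1 \<le> norm z \<and> norm z \<le> r0} \<noteq> {}" using y1 r0 by (intro notI) (metis (mono_tags) empty_iff mem_Collect_eq order_refl)
      show "\<forall>z\<in>{z. norm z = 1}. 0 \<le> wgt \<delta> z * \<bar>u z\<bar>" by (simp add: wgt_def)
      show "\<forall>z\<in>{z. 1 \<le> norm z \<and> norm z \<le> r0}. 0 \<le> wgt \<delta> z * \<bar>lap u z - Xop u z\<bar>" by (simp add: wgt_def)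
      fix a b
      assume fa: "\<forall>z\<in>{z. norm z = 1}. wgt \<delta> z * \<bar>u z\<bar> \<le> a"
        and gb: "\<forall>z\<in>{z. 1 \<le> norm z \<and> norm z \<le> r0}. wgt \<delta> z * \<bar>lap u z - Xop u z\<bar> \<le> b"
        and a0: "0 \<le> a" and b0: "0 \<le> b"
      show "\<forall>z\<in>{z. 1 \<le> norm z \<and> norm z \<le> r0}. wgt \<delta> z * \<bar>u z\<bar> \<le> max a (Kr * b)"
      proof
        fix z :: "complex^'n" assume z: "z \<in> {z. 1 \<le> norm z \<and> norm z \<le> r0}"
        have up: "wgt \<delta> z * u z \<le> max a (Kr * b)"
        proof (rule core2[OF d r0 U(1) U(2) du d2])
          show "wgt \<delta> y * u y \<le> a" if "norm y = 1" for y using fa that wabs[of \<delta> y "u y"] by force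
          show "u y = 0" if "norm y = r0" for y using h0 that by simp
          show "wgt \<delta> y * \<bar>lap u y - Xop u y\<bar> \<le> b" if "1 \<le> norm y" "norm y \<le> r0" for y using gb that by simp
        qed (use z a0 Mb Mnn in auto)
        have um: "wgt \<delta> z * (- u z) \<le> max a (Kr * b)"
        proof (rule core2[OF d r0 U(1) U(2) nU(1) nU(2)])
          show "wgt \<delta> y * - u y \<le> a" if "norm y = 1" for y using fa that wabsn[of \<delta> y "u y"] by force
          show "- u y = 0" if "norm y = r0" for y using h0 that by simp
          show "wgt \<delta> y * \<bar>lap (\<lambda>y. - u y) y - Xop (\<lambda>y. - u y) y\<bar> \<le> b" if "1 \<le> norm y" "norm y \<le> r0" for y
          proof -
            have yU: "y \<in> U" using U(2) that by auto
            have "wgt \<delta> y * \<bar>lap u y - Xop u y\<bar> \<le> b" using gb that by simp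
            then show ?thesis using nU(3)[OF yU] nU(4)[OF yU] by (simp add: abs_minus_commute)
          qed
        qed (use z a0 Mb Mnn in auto)
        show "wgt \<delta> z * \<bar>u z\<bar> \<le> max a (Kr * b)"
          using both_signs[OF less_imp_le[OF wgt_pos] up um] .
      qed
    qed
  qed
  have P3: "\<forall>(u :: complex^'n \<Rightarrow> real).
        C2_delta \<delta> {z. 1 \<le> norm z} u \<longrightarrow>
        esup {z. 1 \<le> norm z} (\<lambda>z. wgt \<delta> z * \<bar>u z\<bar>)
          \<le> max (esup {z. norm z = 1} (\<lambda>z. wgt \<delta> z * \<bar>u z\<bar>))
                 (K * esup {z. 1 \<le> norm z} (\<lambda>z. wgt \<delta> z * \<bar>lap u z - Xop u z\<bar>))"
  proof (intro allI impI)
    fix u :: "complex^'n \<Rightarrow> real"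
    assume C: "C2_delta \<delta> {z. 1 \<le> norm z} u"
    then obtain U where U: "open U" "{z. 1 \<le> norm z} \<subseteq> U"
      and du: "\<forall>x\<in>U. u differentiable (at x)"
      and d2: "\<forall>v. \<forall>x\<in>U. (\<lambda>y. frechet_derivative u (at y) v) differentiable (at x)"
      unfolding C2_delta_def C2_on_def by blast
    obtain Mb where Mb0: "\<forall>z\<in>{z. 1 \<le> norm z}. \<bar>wgt \<delta> z * u z\<bar> \<le> Mb"
      using C unfolding C2_delta_def C2_bounded_def by blast
    note nU = neg_C2[OF U(1) du d2]
    show "esup {z. 1 \<le> norm z} (\<lambda>z. wgt \<delta> z * \<bar>u z\<bar>)
          \<le> max (esup {z. norm z = 1} (\<lambda>z. wgt \<delta> z * \<bar>u z\<bar>))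
                 (K * esup {z. 1 \<le> norm z} (\<lambda>z. wgt \<delta> z * \<bar>lap u z - Xop u z\<bar>))"
      unfolding Keq
    proof (rule esup_reduce[OF _ _ Kr])
      obtain y1 :: "complex^'n" where y1: "norm y1 = 1" using exists_norm[of 1] by auto
      show "{z::complex^'n. norm z = 1} \<noteq> {}" using y1 by auto
      show "{z::complex^'n. 1 \<le> norm z} \<noteq> {}" using y1 by (intro notI) (metis (mono_tags) empty_iff mem_Collect_eq order_refl)
      show "\<forall>z\<in>{z. norm z = 1}. 0 \<le> wgt \<delta> z * \<bar>u z\<bar>" by (simp add: wgt_def)
      show "\<forall>z\<in>{z. 1 \<le> norm z}. 0 \<le> wgt \<delta> z * \<bar>lap u z - Xop u z\<bar>" by (simp add: wgt_def)
      fix a b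
      assume fa: "\<forall>z\<in>{z. norm z = 1}. wgt \<delta> z * \<bar>u z\<bar> \<le> a"
        and gb: "\<forall>z\<in>{z. 1 \<le> norm z}. wgt \<delta> z * \<bar>lap u z - Xop u z\<bar> \<le> b"
        and a0: "0 \<le> a" and b0: "0 \<le> b"
      show "\<forall>z\<in>{z. 1 \<le> norm z}. wgt \<delta> z * \<bar>u z\<bar> \<le> max a (Kr * b)"
      proof
        fix z :: "complex^'n" assume z: "z \<in> {z. 1 \<le> norm z}"
        have up: "wgt \<delta> z * u z \<le> max a (Kr * b)"
        proof (rule core3[OF d U(1) U(2) du d2])
          show "wgt \<delta> y * u y \<le> a" if "norm y = 1" for y using fa that wabs[of \<delta> y "u y"] by force
          show "wgt \<delta> y * u y \<le> Mb" if "1 \<le> norm y" for y using Mb0 that by force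
          show "wgt \<delta> y * \<bar>lap u y - Xop u y\<bar> \<le> b" if "1 \<le> norm y" for y using gb that by simp
        qed (use z a0 Mb Mnn in auto)
        have um: "wgt \<delta> z * (- u z) \<le> max a (Kr * b)"
        proof (rule core3[OF d U(1) U(2) nU(1) nU(2)])
          show "wgt \<delta> y * - u y \<le> a" if "norm y = 1" for y using fa that wabsn[of \<delta> y "u y"] by force
          show "wgt \<delta> y * - u y \<le> Mb" if "1 \<le> norm y" for y using Mb0 that by force
          show "wgt \<delta> y * \<bar>lap (\<lambda>y. - u y) y - Xop (\<lambda>y. - u y) y\<bar> \<le> b" if "1 \<le> norm y" for y
          proof -
            have yU: "y \<in> U" using U(2) that by auto
            have "wgt \<delta> y * \<bar>lap u y - Xop u y\<bar> \<le> b" using gb that by simp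
            then show ?thesis using nU(3)[OF yU] nU(4)[OF yU] by (simp add: abs_minus_commute)
          qed
        qed (use z a0 Mb Mnn in auto)
        show "wgt \<delta> z * \<bar>u z\<bar> \<le> max a (Kr * b)"
          using both_signs[OF less_imp_le[OF wgt_pos] up um] .
      qed
    qed
  qed
  show ?thesis using P1 P2 P3 by blast
qed


end
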